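(* Let $\mathcal{H}$ be a real Hilbert space, let $A_1, A_2:\mathcal{H}\to 2^{\mathcal{H}}$ be maximally monotone, let $B:\mathcal{H}\to\mathcal{H}$ be monotone and $L$-Lipschitz continuous ($L>0$), let $C:\mathcal{H}\to\mathcal{H}$ be $\beta$-cocoercive ($\beta>0$), and assume that $\mathrm{zer}(A_1+A_2+B+C)\neq\emptyset$. Let $\lambda>0$ and $\gamma\in\left(0,\frac{\lambda\beta}{\beta+\lambda(2\beta L+1)}\right)$. Let $x_0,x_{-1},u_0\in\mathcal{H}$ and define for $n\ge0$ $$\begin{aligned}x_{n+1}&=J_{\gamma A_2}\big(x_n-\gamma u_n-\gamma(2Bx_n-Bx_{n-1})-\gamma Cx_n\big),\\ y_{n+1}&=J_{\lambda A_1}(2x_{n+1}-x_n+\lambda u_n),\\ u_{n+1}&=u_n+\tfrac{1}{\lambda}(2x_{n+1}-x_n-y_{n+1}).\end{aligned}$$ Then $\{x_n\}$ converges weakly to a point $\bar x\in\mathrm{zer}(A_1+A_2+B+C)$.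
   Context: $J_{\gamma A}=(\mathrm{Id}+\gamma A)^{-1}$ denotes the resolvent of a maximally monotone operator $A$. $\mathrm{zer}(T)=\{x:0\in Tx\}$. $C$ is $\beta$-cocoercive if $\langle x-y,Cx-Cy\rangle\ge\beta\|Cx-Cy\|^2$ for all $x,y$. *)

theory Defs
  imports "HOL-Analysis.Analysis"
begin

definition monotone_op :: "('a::real_inner \<Rightarrow> 'a set) \<Rightarrow> bool" where
  "monotone_op A \<longleftrightarrow>
     (\<forall>x y u v. u \<in> A x \<longrightarrow> v \<in> A y \<longrightarrow> 0 \<le> (x - y) \<bullet> (u - v))"

definition maximally_monotone :: "('a::real_inner \<Rightarrow> 'a set) \<Rightarrow> bool" where
  "maximally_monotone A \<longleftrightarrow> monotone_op A \<and>
     (\<forall>x u. (\<forall>y v. v \<in> A y \<longrightarrow> 0 \<le> (x - y) \<bullet> (u - v)) \<longrightarrow> u \<in> A x)"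

definition monotone_fun :: "('a::real_inner \<Rightarrow> 'a) \<Rightarrow> bool" where
  "monotone_fun B \<longleftrightarrow> (\<forall>x y. 0 \<le> (x - y) \<bullet> (B x - B y))"

definition cocoercive :: "real \<Rightarrow> ('a::real_inner \<Rightarrow> 'a) \<Rightarrow> bool" where
  "cocoercive \<beta> C \<longleftrightarrow> (\<forall>x y. (x - y) \<bullet> (C x - C y) \<ge> \<beta> * (norm (C x - C y))\<^sup>2)"

text \<open>Resolvent J_{\<gamma>A} = (Id + \<gamma>A)^{-1}: the unique p with x \<in> p + \<gamma> A p
  (single-valued and everywhere defined when A is maximally monotone, \<gamma> > 0).\<close>
definition resolvent :: "real \<Rightarrow> ('a::real_inner \<Rightarrow> 'a set) \<Rightarrow> 'a \<Rightarrow> 'a" where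
  "resolvent \<gamma> A x = (THE p. \<exists>a \<in> A p. x = p + \<gamma> *\<^sub>R a)"

definition zer :: "('a::real_vector \<Rightarrow> 'a set) \<Rightarrow> 'a set" where
  "zer T = {x. 0 \<in> T x}"

definition op_sum4 :: "('a::real_vector \<Rightarrow> 'a set) \<Rightarrow> ('a \<Rightarrow> 'a set) \<Rightarrow> ('a \<Rightarrow> 'a) \<Rightarrow> ('a \<Rightarrow> 'a) \<Rightarrow> 'a \<Rightarrow> 'a set" where
  "op_sum4 A1 A2 B C x = {a1 + a2 + B x + C x | a1 a2. a1 \<in> A1 x \<and> a2 \<in> A2 x}"

definition weakly_converges :: "(nat \<Rightarrow> 'a::real_inner) \<Rightarrow> 'a \<Rightarrow> bool" where
  "weakly_converges x l \<longleftrightarrow> (\<forall>z. (\<lambda>n. x n \<bullet> z) \<longlonglongrightarrow> l \<bullet> z)"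

end

theory Submission
  imports Defs "HOL-Library.Diagonal_Subsequence"
begin

lemma real_quad_zero:
  fixes c a :: real
  assumes "a \<ge> 0" "\<And>t. t*c + t^2*a \<ge> 0"
  shows "c = 0"
proof (rule ccontr)
  assume c: "c \<noteq> 0"
  define t where "t = - c / (a + 1)"
  have h: "t*c + t^2*a \<ge> 0" by (rule assms(2))
  have ne: "a + 1 \<noteq> 0" using assms(1) by simp
  have "t*c + t^2*a = -(c^2)/(a+1)^2" unfolding t_def using ne
    by (simp add: divide_simps power2_eq_square) algebra
  moreover have "c^2/(a+1)^2 > 0" using c assms(1) by simp
  ultimately show False using h by simp
qed

lemma small_t:
  fixes a b :: real
  assumes "\<And>t. 0 < t \<Longrightarrow> t \<le> 1 \<Longrightarrow> a \<le> t*b"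
  shows "a \<le> 0"
proof (rule ccontr)
  assume a: "\<not> a \<le> 0"
  show False
  proof (cases "b \<le> 0")
    case True
    then show ?thesis using assms[of 1] a by simp
  next
    case False
    define t where "t = min 1 (a/(2*b))"
    have t0: "t > 0" using a False by (simp add: t_def)
    have "t*b \<le> a/(2*b) * b" using False by (intro mult_right_mono) (auto simp: t_def)
    also have "\<dots> = a/2" using False by simp
    finally show ?thesis using assms[of t] t0 a by (simp add: t_def)
  qed
qed

lemma cauchy_from_bound:
  fixes s :: "nat \<Rightarrow> 'a::real_normed_vector"
  assumes "\<And>i j. (norm (s i - s j))^2 \<le> c/(real i+1) + c/(real j+1)"
  shows "Cauchy s"
proof (rule metric_CauchyI)
  fix e :: real assume e: "e > 0"
  have c0: "c \<ge> 0" using assms[of 0 0] by simp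
  obtain M :: nat where M: "2*c/e^2 < real M" using reals_Archimedean2 by blast
  show "\<exists>M. \<forall>m\<ge>M. \<forall>n\<ge>M. dist (s m) (s n) < e"
  proof (intro exI allI impI)
    fix m n assume m: "m \<ge> M" and n: "n \<ge> M"
    have "c/(real m+1) \<le> c/(real M+1)" using m c0 by (intro divide_left_mono) auto
    moreover have "c/(real n+1) \<le> c/(real M+1)" using n c0 by (intro divide_left_mono) auto
    moreover have "2*c/(real M + 1) < e^2"
    proof -
      have "2*c < e^2 * real M" using M e by (simp add: field_simps)
      also have "\<dots> \<le> e^2 * (real M + 1)" using e by simp
      finally show ?thesis by (simp add: field_simps)
    qed
    ultimately have "(norm (s m - s n))^2 < e^2" using assms[of m n] by simp
    then have "norm (s m - s n) < e" using e by (simp add: power_less_imp_less_base)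
    then show "dist (s m) (s n) < e" by (simp add: dist_norm)
  qed
qed


lemma lim_inv1: "(\<lambda>n. 1/(real n + 1)) \<longlonglongrightarrow> 0"
  using LIMSEQ_inverse_real_of_nat by (simp add: inverse_eq_divide add.commute)

lemma riesz_subspace:
  fixes M :: "'a::{real_inner,complete_space} set" and f :: "'a \<Rightarrow> real"
  assumes sub: "subspace M" and cl: "closed M"
    and add: "\<And>y z. y \<in> M \<Longrightarrow> z \<in> M \<Longrightarrow> f (y + z) = f y + f z"
    and scl: "\<And>y c. y \<in> M \<Longrightarrow> f (c *\<^sub>R y) = c * f y"
    and bnd: "\<And>y. y \<in> M \<Longrightarrow> \<bar>f y\<bar> \<le> K * norm y"
  shows "\<exists>w\<in>M. \<forall>y\<in>M. w \<bullet> y = f y"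
proof -
  define g where "g y = (norm y)^2/2 - f y" for y
  have glow: "g y \<ge> -(K^2)/2" if "y \<in> M" for y
  proof -
    have "f y \<le> K * norm y" using bnd[OF that] by simp
    moreover have "0 \<le> (norm y - K)^2" by simp
    ultimately show ?thesis unfolding g_def by (simp add: power2_eq_square algebra_simps)
  qed
  have M0: "0 \<in> M" using sub by (simp add: subspace_0)
  define m where "m = Inf (g ` M)"
  have bdd: "bdd_below (g ` M)" using glow by (auto intro!: bdd_belowI[of _ "-(K^2)/2"])
  have mle: "m \<le> g y" if "y \<in> M" for y unfolding m_def using bdd that by (simp add: cInf_lower)
  have "\<exists>y\<in>M. g y < m + 1/(real n+1)" for n
  proof -
    have "Inf (g ` M) < m + 1/(real n+1)" unfolding m_def by simp
    then obtain z where "z \<in> g ` M" "z < m + 1/(real n+1)"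
      using cInf_lessD[of "g ` M"] M0 by blast
    then show ?thesis by auto
  qed
  then obtain ys where ysM: "\<And>n. ys n \<in> M" and ysg: "\<And>n. g (ys n) < m + 1/(real n+1)"
    by metis
  have mid: "(norm (a - b))^2 \<le> 4*(g a + g b - 2*m)" if "a \<in> M" "b \<in> M" for a b
  proof -
    have abM: "(1/2) *\<^sub>R (a + b) \<in> M" using sub that by (simp add: subspace_add subspace_scale)
    have "m \<le> g ((1/2) *\<^sub>R (a + b))" using mle[OF abM] .
    moreover have "g ((1/2) *\<^sub>R (a + b)) = (g a + g b)/2 - (norm (a-b))^2/8"
    proof -
      have "f ((1/2) *\<^sub>R (a + b)) = (f a + f b)/2" using scl add that sub
        by (simp add: subspace_add)
      moreover have "(norm ((1/2) *\<^sub>R (a + b)))^2 = ((norm a)^2 + (norm b)^2)/2 - (norm (a-b))^2/4"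
        apply (simp add: power2_norm_eq_inner inner_add_left inner_add_right inner_diff_left inner_diff_right inner_commute algebra_simps)
        by (simp add: field_simps)
      ultimately show ?thesis unfolding g_def by (simp add: algebra_simps)
    qed
    ultimately show ?thesis by (simp add: field_simps)
  qed
  have "Cauchy ys"
  proof (rule cauchy_from_bound[where c=4])
    fix i j
    have "(norm (ys i - ys j))^2 \<le> 4*(g (ys i) + g (ys j) - 2*m)" using mid ysM by blast
    also have "\<dots> \<le> 4/(real i+1) + 4/(real j+1)" using ysg[of i] ysg[of j] by simp
    finally show "(norm (ys i - ys j))^2 \<le> 4/(real i+1) + 4/(real j+1)" .
  qed
  then obtain w where w: "ys \<longlonglongrightarrow> w" using Cauchy_convergent_iff convergent_def by blast
  have wM: "w \<in> M" using closed_sequentially[OF cl ysM w] .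
  have fconv: "(\<lambda>n. f (ys n)) \<longlonglongrightarrow> f w"
  proof -
    have "(\<lambda>n. f (ys n) - f w) \<longlonglongrightarrow> 0"
    proof (rule Lim_null_comparison)
      show "\<forall>\<^sub>F n in sequentially. norm (f (ys n) - f w) \<le> K * norm (ys n - w)"
      proof (intro always_eventually allI)
        fix n
        have "f (ys n) - f w = f (ys n - w)"
          using add[of "ys n - w" w] sub ysM wM by (simp add: subspace_diff)
        then show "norm (f (ys n) - f w) \<le> K * norm (ys n - w)"
          using bnd[of "ys n - w"] sub ysM wM by (simp add: subspace_diff)
      qed
      have "(\<lambda>n. ys n - w) \<longlonglongrightarrow> 0" using w by (simp add: LIM_zero)
      then have "(\<lambda>n. norm (ys n - w)) \<longlonglongrightarrow> 0" by (simp add: tendsto_norm_zero)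
      then show "(\<lambda>n. K * norm (ys n - w)) \<longlonglongrightarrow> 0" using tendsto_mult_right_zero by blast
    qed
    then show ?thesis by (simp add: LIM_zero_iff)
  qed
  have gconv: "(\<lambda>n. g (ys n)) \<longlonglongrightarrow> g w"
    unfolding g_def by (intro tendsto_intros fconv w) auto
  have "(\<lambda>n. m + 1/(real n+1)) \<longlonglongrightarrow> m + 0"
    by (intro tendsto_intros lim_inv1)
  then have "g w \<le> m" using gconv ysg
    by (intro LIMSEQ_le[OF gconv]) (auto intro: less_imp_le)
  then have gw: "g w \<le> g y" if "y \<in> M" for y using mle[OF that] by simp
  show ?thesis
  proof (intro bexI[OF _ wM] ballI)
    fix y assume yM: "y \<in> M"
    show "w \<bullet> y = f y"
    proof -
      have "t*(w \<bullet> y - f y) + t^2*((norm y)^2/2) \<ge> 0" for t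
      proof -
        have tyM: "w + t *\<^sub>R y \<in> M" using sub wM yM by (simp add: subspace_add subspace_scale)
        have "g w \<le> g (w + t *\<^sub>R y)" using gw[OF tyM] .
        moreover have "f (w + t *\<^sub>R y) = f w + t * f y" using add scl sub wM yM
          by (simp add: subspace_scale)
        moreover have "(norm (w + t *\<^sub>R y))^2 = (norm w)^2 + 2*t*(w \<bullet> y) + t^2 * (norm y)^2"
          unfolding power2_norm_eq_inner by (simp add: inner_add_left inner_add_right inner_commute power2_eq_square algebra_simps)
        ultimately show ?thesis unfolding g_def by (simp add: algebra_simps)
      qed
      then have "w \<bullet> y - f y = 0" by (intro real_quad_zero[of "(norm y)^2/2"]) auto
      then show ?thesis by simp
    qed
  qed
qed


lemma weak_compact:
  fixes s :: "nat \<Rightarrow> 'a::{real_inner,complete_space}"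
  assumes sb: "\<And>n. norm (s n) \<le> K"
  shows "\<exists>r l. strict_mono r \<and> weakly_converges (s \<circ> r) l"
proof -
  have K0: "K \<ge> 0" using sb[of 0] norm_ge_zero[of "s 0"] by linarith
  have ibnd: "\<bar>s n \<bullet> v\<bar> \<le> K * norm v" for n v
  proof -
    have "\<bar>s n \<bullet> v\<bar> \<le> norm (s n) * norm v" by (rule Cauchy_Schwarz_ineq2)
    also have "\<dots> \<le> K * norm v" using sb[of n] by (intro mult_right_mono) auto
    finally show ?thesis .
  qed
  interpret ss: subseqs "\<lambda>n r. convergent (\<lambda>k. s (r k) \<bullet> s n)"
  proof
    fix n and s' :: "nat \<Rightarrow> nat" assume "strict_mono s'"
    have "bounded (range (\<lambda>k. s (s' k) \<bullet> s n))"
      unfolding bounded_iff using ibnd by (auto intro!: exI[of _ "K * norm (s n)"])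
    then obtain l r where "strict_mono r" "((\<lambda>k. s (s' k) \<bullet> s n) \<circ> r) \<longlonglongrightarrow> l"
      using bounded_imp_convergent_subsequence by blast
    then show "\<exists>r'. strict_mono r' \<and> convergent (\<lambda>k. s ((s' \<circ> r') k) \<bullet> s n)"
      by (auto simp: convergent_def o_def)
  qed
  define r where "r = ss.diagseq"
  have rmono: "strict_mono r" unfolding r_def by (rule ss.subseq_diagseq)
  define t where "t k = s (r k)" for k
  have tconv: "convergent (\<lambda>k. t k \<bullet> s n)" for n
  proof -
    have "convergent (\<lambda>k. s ((ss.diagseq \<circ> (+) (Suc n)) k) \<bullet> s n)"
    proof (rule ss.diagseq_holds)
      fix r' :: "nat \<Rightarrow> nat" and s' n assume "strict_mono r'" "convergent (\<lambda>k. s (s' k) \<bullet> s n)"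
      from convergent_subseq_convergent[OF this(2) this(1)]
      show "convergent (\<lambda>k. s ((s' \<circ> r') k) \<bullet> s n)" by (simp add: o_def)
    qed
    then obtain l where "(\<lambda>k. s (ss.diagseq (k + Suc n)) \<bullet> s n) \<longlonglongrightarrow> l"
      by (auto simp: convergent_def o_def add.commute)
    then have "(\<lambda>k. s (ss.diagseq k) \<bullet> s n) \<longlonglongrightarrow> l" by (rule LIMSEQ_offset)
    then show ?thesis unfolding t_def r_def convergent_def by blast
  qed
  define G where "G = {v. convergent (\<lambda>k. t k \<bullet> v)}"
  have subG: "subspace G"
    unfolding subspace_def G_def
  proof (intro conjI ballI allI)
    show "0 \<in> {v. convergent (\<lambda>k. t k \<bullet> v)}" by (simp add: convergent_const)
  next
    fix x y assume "x \<in> {v. convergent (\<lambda>k. t k \<bullet> v)}" "y \<in> {v. convergent (\<lambda>k. t k \<bullet> v)}"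
    then show "x + y \<in> {v. convergent (\<lambda>k. t k \<bullet> v)}" by (simp add: inner_add_right convergent_add)
  next
    fix c x assume "x \<in> {v. convergent (\<lambda>k. t k \<bullet> v)}"
    then show "c *\<^sub>R x \<in> {v. convergent (\<lambda>k. t k \<bullet> v)}"
      by (cases "c = 0") (simp_all add: convergent_mult_const_iff convergent_const)
  qed
  have clG: "closed G"
    unfolding closed_sequential_limits
  proof (intro allI impI)
    fix vs v assume h: "(\<forall>n. vs n \<in> G) \<and> vs \<longlonglongrightarrow> v"
    show "v \<in> G" unfolding G_def
    proof (simp, rule real_Cauchy_convergent, rule metric_CauchyI)
      fix e :: real assume e: "e > 0"
      have "(\<lambda>n. norm (vs n - v)) \<longlonglongrightarrow> 0" using h
        by (simp add: tendsto_norm_zero LIM_zero)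
      moreover have "e/(3*(K+1)) > 0" using e K0 by simp
      ultimately obtain j where j: "norm (vs j - v) < e/(3*(K+1))"
        using LIMSEQ_D by fastforce
      have "convergent (\<lambda>k. t k \<bullet> vs j)" using h G_def by auto
      then have "Cauchy (\<lambda>k. t k \<bullet> vs j)" using Cauchy_convergent_iff by blast
      then obtain M where M: "\<forall>m\<ge>M. \<forall>n\<ge>M. dist (t m \<bullet> vs j) (t n \<bullet> vs j) < e/3"
        using e unfolding Cauchy_def by (meson divide_pos_pos zero_less_numeral)
      show "\<exists>M. \<forall>m\<ge>M. \<forall>n\<ge>M. dist (t m \<bullet> v) (t n \<bullet> v) < e"
      proof (intro exI allI impI)
        fix m n assume mn: "m \<ge> M" "n \<ge> M"
        have tb: "\<bar>t k \<bullet> (v - vs j)\<bar> \<le> K * norm (vs j - v)" for k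
          using ibnd[of "r k" "v - vs j"] by (simp add: t_def norm_minus_commute)
        have "K * norm (vs j - v) \<le> (K+1) * (e/(3*(K+1)))"
          using j K0 by (intro mult_mono) auto
        also have "\<dots> = e/3" using K0 by (simp add: field_simps)
        finally have kb: "K * norm (vs j - v) \<le> e/3" .
        have "t m \<bullet> v - t n \<bullet> v = t m \<bullet> (v - vs j) + (t m \<bullet> vs j - t n \<bullet> vs j) - t n \<bullet> (v - vs j)"
          by (simp add: inner_diff_right)
        moreover have "\<bar>t m \<bullet> vs j - t n \<bullet> vs j\<bar> < e/3" using M mn by (simp add: dist_real_def)
        ultimately have "\<bar>t m \<bullet> v - t n \<bullet> v\<bar> < e" using tb[of m] tb[of n] kb by linarith
        then show "dist (t m \<bullet> v) (t n \<bullet> v) < e" by (simp add: dist_real_def)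
      qed
    qed
  qed
  have sG: "t k \<in> G" for k
  proof -
    have "convergent (\<lambda>j. t j \<bullet> s (r k))" by (rule tconv)
    then show ?thesis unfolding G_def t_def by simp
  qed
  define f where "f v = lim (\<lambda>k. t k \<bullet> v)" for v
  have flim: "(\<lambda>k. t k \<bullet> v) \<longlonglongrightarrow> f v" if "v \<in> G" for v
    using that unfolding G_def f_def by (simp add: convergent_LIMSEQ_iff)
  have "\<exists>w\<in>G. \<forall>y\<in>G. w \<bullet> y = f y"
  proof (rule riesz_subspace[OF subG clG])
    fix y z assume "y \<in> G" "z \<in> G"
    then have "(\<lambda>k. t k \<bullet> y + t k \<bullet> z) \<longlonglongrightarrow> f y + f z" by (intro tendsto_add flim)
    moreover have "(\<lambda>k. t k \<bullet> (y + z)) \<longlonglongrightarrow> f (y + z)" using \<open>y \<in> G\<close> \<open>z \<in> G\<close> subG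
      by (intro flim) (simp add: subspace_add)
    ultimately show "f (y + z) = f y + f z" by (simp add: inner_add_right LIMSEQ_unique)
  next
    fix y c assume "y \<in> G"
    then have "(\<lambda>k. c * (t k \<bullet> y)) \<longlonglongrightarrow> c * f y" by (intro tendsto_mult_left flim)
    moreover have "(\<lambda>k. t k \<bullet> (c *\<^sub>R y)) \<longlonglongrightarrow> f (c *\<^sub>R y)" using \<open>y \<in> G\<close> subG
      by (intro flim) (simp add: subspace_scale)
    ultimately show "f (c *\<^sub>R y) = c * f y" by (simp add: LIMSEQ_unique)
  next
    fix y assume "y \<in> G"
    then have "(\<lambda>k. \<bar>t k \<bullet> y\<bar>) \<longlonglongrightarrow> \<bar>f y\<bar>" by (intro tendsto_rabs flim)
    then show "\<bar>f y\<bar> \<le> K * norm y"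
      by (rule LIMSEQ_le_const2) (auto simp: t_def ibnd)
  qed
  then obtain w where wG: "w \<in> G" and wf: "\<And>y. y \<in> G \<Longrightarrow> w \<bullet> y = f y" by blast
  have "weakly_converges t w"
    unfolding weakly_converges_def
  proof
    fix v
    have "\<exists>p\<in>G. \<forall>y\<in>G. p \<bullet> y = v \<bullet> y"
      by (rule riesz_subspace[OF subG clG, where K="norm v"])
         (auto simp: inner_add_right Cauchy_Schwarz_ineq2)
    then obtain p where pG: "p \<in> G" and pv: "\<And>y. y \<in> G \<Longrightarrow> p \<bullet> y = v \<bullet> y" by blast
    have "(\<lambda>k. t k \<bullet> p) \<longlonglongrightarrow> f p" using flim[OF pG] .
    moreover have "t k \<bullet> p = t k \<bullet> v" for k using pv[OF sG[of k]] by (simp add: inner_commute)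
    moreover have "f p = w \<bullet> v" using wf[OF pG] pv[OF wG] by (simp add: inner_commute)
    ultimately show "(\<lambda>k. t k \<bullet> v) \<longlonglongrightarrow> w \<bullet> v" by simp
  qed
  then show ?thesis using rmono unfolding t_def by (auto simp: o_def)
qed

lemma maxmono_monotone: "maximally_monotone A \<Longrightarrow> v \<in> A y \<Longrightarrow> v' \<in> A y' \<Longrightarrow> 0 \<le> (y - y') \<bullet> (v - v')"
  unfolding maximally_monotone_def monotone_op_def by blast

lemma maxmono_max: "maximally_monotone A \<Longrightarrow> (\<And>y v. v \<in> A y \<Longrightarrow> 0 \<le> (x - y) \<bullet> (u - v)) \<Longrightarrow> u \<in> A x"
  unfolding maximally_monotone_def by blast

lemma maxmono_nonempty: assumes "maximally_monotone A" shows "\<exists>y v. v \<in> A y"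
proof (rule ccontr)
  assume h: "\<not> (\<exists>y v. v \<in> A y)"
  then have "0 \<in> A 0" by (intro maxmono_max[OF assms]) auto
  then show False using h by blast
qed

lemma norm_half_sum_sq:
  fixes x x' :: "'a::real_inner"
  shows "(norm ((1/2) *\<^sub>R (x + x')))^2 = ((norm x)^2 + (norm x')^2)/2 - (norm (x - x'))^2/4"
  unfolding power2_norm_eq_inner
  by (simp add: inner_add_left inner_add_right inner_diff_left inner_diff_right inner_commute field_simps)

lemma norm_line_sq:
  fixes x y :: "'a::real_inner"
  shows "(norm (x + t *\<^sub>R (y - x)))^2 = (norm x)^2 + 2*t*(x \<bullet> (y - x)) + t^2*(norm (y - x))^2"
  unfolding power2_norm_eq_inner
  by (simp add: inner_add_left inner_add_right inner_commute power2_eq_square algebra_simps)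

lemma minty0:
  fixes A :: "'a::{real_inner,complete_space} \<Rightarrow> 'a set"
  assumes mm: "maximally_monotone A"
  shows "\<exists>p. - p \<in> A p"
proof -
  define E where "E x u y v = x \<bullet> v + y \<bullet> u - y \<bullet> v + ((norm x)^2 + (norm u)^2)/2" for x u y v :: 'a
  define Hp where "Hp x u r = (\<forall>y v. v \<in> A y \<longrightarrow> E x u y v \<le> r)" for x u r
  have F3: "x \<bullet> u + ((norm x)^2 + (norm u)^2)/2 \<le> r" if "Hp x u r" for x u r
  proof (cases "u \<in> A x")
    case True
    then have "E x u x u \<le> r" using that unfolding Hp_def by blast
    then show ?thesis unfolding E_def by simp
  next
    case False
    then obtain y v where yv: "v \<in> A y" "\<not> 0 \<le> (x - y) \<bullet> (u - v)"
      using maxmono_max[OF mm, of x u] by blast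
    then have "x \<bullet> u < x \<bullet> v + y \<bullet> u - y \<bullet> v"
      by (simp add: inner_diff_left inner_diff_right inner_commute)
    moreover have "E x u y v \<le> r" using that yv(1) unfolding Hp_def by blast
    ultimately show ?thesis unfolding E_def by simp
  qed
  have F3': "0 \<le> r" if "Hp x u r" for x u r
  proof -
    have "0 \<le> (norm (x + u))^2/2" by simp
    also have "(norm (x + u))^2/2 = x \<bullet> u + ((norm x)^2 + (norm u)^2)/2"
      unfolding power2_norm_eq_inner by (simp add: inner_add_left inner_add_right inner_commute)
    finally show ?thesis using F3[OF that] by simp
  qed
  define R where "R = {r. \<exists>x u. Hp x u r}"
  obtain y0 v0 where y0: "v0 \<in> A y0" using maxmono_nonempty[OF mm] by blast
  have "Hp y0 v0 (E y0 v0 y0 v0)"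
    unfolding Hp_def
  proof (intro allI impI)
    fix y v assume "v \<in> A y"
    then have "0 \<le> (y0 - y) \<bullet> (v0 - v)" using maxmono_monotone[OF mm y0] by blast
    then show "E y0 v0 y v \<le> E y0 v0 y0 v0" unfolding E_def
      by (simp add: inner_diff_left inner_diff_right inner_commute)
  qed
  then have Rne: "R \<noteq> {}" unfolding R_def by blast
  have Rbdd: "bdd_below R" unfolding R_def using F3' by (auto intro!: bdd_belowI[of _ 0])
  define m where "m = Inf R"
  have mle: "m \<le> r" if "Hp x u r" for x u r
    unfolding m_def using that Rbdd by (intro cInf_lower) (auto simp: R_def)
  have Hmono: "Hp x u r'" if "Hp x u r" "r \<le> r'" for x u r r'
    using that unfolding Hp_def by force
  have "\<exists>x u. Hp x u (m + 1/(real n+1))" for n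
  proof -
    have "Inf R < m + 1/(real n+1)" unfolding m_def by simp
    then obtain r where "r \<in> R" "r < m + 1/(real n+1)" using cInf_lessD[OF Rne] by blast
    then obtain x u where "Hp x u r" unfolding R_def by blast
    then show ?thesis using Hmono \<open>r < m + 1/(real n+1)\<close> by (meson less_imp_le)
  qed
  then obtain xs us where Hs: "\<And>n. Hp (xs n) (us n) (m + 1/(real n+1))" by metis
  have midH: "Hp ((1/2) *\<^sub>R (x + x')) ((1/2) *\<^sub>R (u + u')) ((r + r')/2 - ((norm (x - x'))^2 + (norm (u - u'))^2)/8)"
    if "Hp x u r" "Hp x' u' r'" for x u r x' u' r'
    unfolding Hp_def
  proof (intro allI impI)
    fix y v assume yv: "v \<in> A y"
    have e1: "E x u y v \<le> r" "E x' u' y v \<le> r'" using that yv unfolding Hp_def by blast+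
    have "E ((1/2) *\<^sub>R (x + x')) ((1/2) *\<^sub>R (u + u')) y v
        = (E x u y v + E x' u' y v)/2 - ((norm (x - x'))^2 + (norm (u - u'))^2)/8"
      unfolding E_def norm_half_sum_sq
      by (simp add: inner_add_left inner_add_right field_simps)
    then show "E ((1/2) *\<^sub>R (x + x')) ((1/2) *\<^sub>R (u + u')) y v \<le> (r + r')/2 - ((norm (x - x'))^2 + (norm (u - u'))^2)/8"
      using e1 by simp
  qed
  have dist2: "(norm (xs i - xs j))^2 + (norm (us i - us j))^2 \<le> 4/(real i+1) + 4/(real j+1)" for i j
  proof -
    have "m \<le> ((m + 1/(real i+1)) + (m + 1/(real j+1)))/2 - ((norm (xs i - xs j))^2 + (norm (us i - us j))^2)/8"
      by (rule mle[OF midH[OF Hs Hs]])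
    moreover have "(m::real) \<le> ((m + a) + (m + b))/2 - (X + Y)/8 \<Longrightarrow> X + Y \<le> 4*a + 4*b" for a b X Y
      by (simp add: field_simps)
    ultimately have "(norm (xs i - xs j))^2 + (norm (us i - us j))^2 \<le> 4 * (1/(real i+1)) + 4 * (1/(real j+1))"
      by blast
    then show ?thesis by simp
  qed
  have "Cauchy xs"
    by (rule cauchy_from_bound[where c=4]) (use dist2 in \<open>smt (verit) zero_le_power2\<close>)
  then obtain xb where xb: "xs \<longlonglongrightarrow> xb" using Cauchy_convergent_iff convergent_def by blast
  have "Cauchy us"
    by (rule cauchy_from_bound[where c=4]) (use dist2 in \<open>smt (verit) zero_le_power2\<close>)
  then obtain ub where ub: "us \<longlonglongrightarrow> ub" using Cauchy_convergent_iff convergent_def by blast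
  have Hb: "Hp xb ub m"
    unfolding Hp_def
  proof (intro allI impI)
    fix y v assume yv: "v \<in> A y"
    have "(\<lambda>n. E (xs n) (us n) y v) \<longlonglongrightarrow> E xb ub y v"
      unfolding E_def by (intro tendsto_intros xb ub) auto
    moreover have "(\<lambda>n. m + 1/(real n+1)) \<longlonglongrightarrow> m + 0" by (intro tendsto_intros lim_inv1)
    moreover have "E (xs n) (us n) y v \<le> m + 1/(real n+1)" for n using Hs[of n] yv unfolding Hp_def by blast
    ultimately show "E xb ub y v \<le> m" using LIMSEQ_le by fastforce
  qed
  define Nb where "Nb = ((norm xb)^2 + (norm ub)^2)/2"
  have key: "xb \<bullet> ub \<le> y \<bullet> v + xb \<bullet> (y - xb) + ub \<bullet> (v - ub)" if yv: "v \<in> A y" for y v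
  proof -
    define S where "S = xb \<bullet> (y - xb) + ub \<bullet> (v - ub)"
    define D where "D = (norm (y - xb))^2 + (norm (v - ub))^2"
    have "(m - Nb) - (y \<bullet> v + S) \<le> t * (D/2)" if t: "0 < t" "t \<le> 1" for t
    proof -
      define xt where "xt = xb + t *\<^sub>R (y - xb)"
      define ut where "ut = ub + t *\<^sub>R (v - ub)"
      define Nt where "Nt = ((norm xt)^2 + (norm ut)^2)/2"
      have Nt: "Nt = Nb + t * S + t^2/2 * D"
        unfolding Nt_def Nb_def S_def D_def xt_def ut_def norm_line_sq by (simp add: field_simps)
      have "Hp xt ut ((1-t)*(m - Nb) + t*(y \<bullet> v) + Nt)"
        unfolding Hp_def
      proof (intro allI impI)
        fix y' v' assume y'v': "v' \<in> A y'"
        have "E xb ub y' v' \<le> m" using Hb y'v' unfolding Hp_def by blast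
        moreover have "0 \<le> (y - y') \<bullet> (v - v')" using maxmono_monotone[OF mm yv y'v'] .
        moreover have "E xt ut y' v' = (1-t)*(E xb ub y' v' - Nb) + t*(y \<bullet> v' + y' \<bullet> v - y' \<bullet> v') + Nt"
          unfolding E_def Nt_def Nb_def xt_def ut_def
          by (simp add: inner_add_left inner_add_right inner_diff_left inner_diff_right algebra_simps)
        ultimately show "E xt ut y' v' \<le> (1-t)*(m - Nb) + t*(y \<bullet> v) + Nt"
          using t
          by (simp add: inner_diff_left inner_diff_right inner_commute)
             (smt (verit) mult_left_mono mult_right_mono)
      qed
      then have "m \<le> (1-t)*(m - Nb) + t*(y \<bullet> v) + Nt" by (rule mle)
      then have "t * ((m - Nb) - (y \<bullet> v + S)) \<le> t * (t * (D/2))"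
        unfolding Nt by (simp add: algebra_simps power2_eq_square)
      then show ?thesis using t by simp
    qed
    then have "(m - Nb) - (y \<bullet> v + S) \<le> 0" by (rule small_t)
    moreover have "xb \<bullet> ub \<le> m - Nb" using F3[OF Hb] unfolding Nb_def by simp
    ultimately show ?thesis unfolding S_def by simp
  qed
  have key2: "(norm (xb + ub))^2 \<le> ((- ub) - y) \<bullet> ((- xb) - v)" if yv: "v \<in> A y" for y v
  proof -
    have "(norm (xb + ub))^2 = xb \<bullet> xb + 2 * (xb \<bullet> ub) + ub \<bullet> ub"
      unfolding power2_norm_eq_inner by (simp add: inner_add_left inner_add_right inner_commute)
    moreover have "((- ub) - y) \<bullet> ((- xb) - v) = ub \<bullet> xb + ub \<bullet> v + y \<bullet> xb + y \<bullet> v"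
      by (simp add: inner_add_left inner_add_right inner_diff_left inner_diff_right)
    ultimately show ?thesis using key[OF yv]
      by (simp add: inner_diff_left inner_diff_right inner_commute)
  qed
  have inA: "- xb \<in> A (- ub)"
    by (rule maxmono_max[OF mm]) (use key2 in \<open>smt (verit) zero_le_power2\<close>)
  have "(norm (xb + ub))^2 \<le> 0" using key2[OF inA] by simp
  then have "xb + ub = 0" by simp
  then have "ub = - xb" by (simp add: eq_neg_iff_add_eq_0 add.commute)
  then show ?thesis using inA by (intro exI[of _ "- ub"]) simp
qed


lemma minty:
  fixes A :: "'a::{real_inner,complete_space} \<Rightarrow> 'a set"
  assumes mm: "maximally_monotone A" and g: "gam > 0"
  shows "\<exists>p. \<exists>a\<in>A p. w = p + gam *\<^sub>R a"
proof -
  define A' where "A' q = (\<lambda>a. gam *\<^sub>R a) ` A (q + w)" for q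
  have "maximally_monotone A'"
    unfolding maximally_monotone_def monotone_op_def
  proof (intro conjI allI impI)
    fix x y u v assume "u \<in> A' x" "v \<in> A' y"
    then obtain a b where ab: "a \<in> A (x + w)" "b \<in> A (y + w)" "u = gam *\<^sub>R a" "v = gam *\<^sub>R b"
      unfolding A'_def by blast
    have "0 \<le> ((x + w) - (y + w)) \<bullet> (a - b)" using maxmono_monotone[OF mm ab(1,2)] .
    then have "0 \<le> gam * ((x - y) \<bullet> (a - b))" using g by simp
    then show "0 \<le> (x - y) \<bullet> (u - v)" using ab by (simp add: inner_diff_right[symmetric] scaleR_diff_right[symmetric])
  next
    fix x u assume h: "\<forall>y v. v \<in> A' y \<longrightarrow> 0 \<le> (x - y) \<bullet> (u - v)"
    have "(1/gam) *\<^sub>R u \<in> A (x + w)"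
    proof (rule maxmono_max[OF mm])
      fix y' b assume b: "b \<in> A y'"
      have "gam *\<^sub>R b \<in> A' (y' - w)" unfolding A'_def using b by (auto simp: image_iff)
      then have h0: "0 \<le> (x - (y' - w)) \<bullet> (u - gam *\<^sub>R b)" using h by blast
      have eqU: "u - gam *\<^sub>R b = gam *\<^sub>R ((1/gam) *\<^sub>R u - b)" using g by (simp add: algebra_simps)
      have xx: "x - (y' - w) = (x + w) - y'" by (simp add: algebra_simps)
      have "0 \<le> ((x + w) - y') \<bullet> (gam *\<^sub>R ((1/gam) *\<^sub>R u - b))" using h0 unfolding eqU xx .
      then have "0 \<le> gam * (((x + w) - y') \<bullet> ((1/gam) *\<^sub>R u - b))" by (simp only: inner_scaleR_right)
      then show "0 \<le> ((x + w) - y') \<bullet> ((1/gam) *\<^sub>R u - b)" using g by (simp add: zero_le_mult_iff)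
    qed
    then show "u \<in> A' x" unfolding A'_def using g by (intro image_eqI[of _ _ "(1/gam) *\<^sub>R u"]) auto
  qed
  then obtain q where "- q \<in> A' q" using minty0 by blast
  then obtain a where a: "a \<in> A (q + w)" "- q = gam *\<^sub>R a" unfolding A'_def by blast
  then have "q = - (gam *\<^sub>R a)" by (metis minus_minus)
  then have "w = (q + w) + gam *\<^sub>R a" by simp
  then show ?thesis using a(1) by blast
qed

lemma resolvent_ex:
  fixes A :: "'a::{real_inner,complete_space} \<Rightarrow> 'a set"
  assumes mm: "maximally_monotone A" and g: "gam > 0"
  shows "\<exists>a\<in>A (resolvent gam A w). w = resolvent gam A w + gam *\<^sub>R a"
proof -
  have "\<exists>!p. \<exists>a\<in>A p. w = p + gam *\<^sub>R a"
  proof (rule ex_ex1I)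
    show "\<exists>p. \<exists>a\<in>A p. w = p + gam *\<^sub>R a" by (rule minty[OF mm g])
  next
    fix p1 p2 assume "\<exists>a\<in>A p1. w = p1 + gam *\<^sub>R a" "\<exists>a\<in>A p2. w = p2 + gam *\<^sub>R a"
    then obtain a1 a2 where h: "a1 \<in> A p1" "w = p1 + gam *\<^sub>R a1" "a2 \<in> A p2" "w = p2 + gam *\<^sub>R a2" by blast
    then have d: "p1 - p2 = gam *\<^sub>R (a2 - a1)" by (simp add: algebra_simps)
    have "0 \<le> (p1 - p2) \<bullet> (a1 - a2)" using maxmono_monotone[OF mm h(1) h(3)] .
    also have "\<dots> = - gam * ((a1 - a2) \<bullet> (a1 - a2))" unfolding d
      by (simp add: inner_diff_left inner_diff_right inner_commute algebra_simps)
    finally have "(a1 - a2) \<bullet> (a1 - a2) \<le> 0" using g by (simp add: mult_le_0_iff)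
    then have "a1 = a2" by (metis antisym inner_ge_zero inner_eq_zero_iff eq_iff_diff_eq_0)
    then show "p1 = p2" using d by simp
  qed
  then show ?thesis unfolding resolvent_def by (rule theI')
qed

definition Qf :: "real \<Rightarrow> real \<Rightarrow> 'a::real_inner \<Rightarrow> 'a \<Rightarrow> real" where
  "Qf gam lam a b = (norm a)^2/gam - 2*(a \<bullet> b) + lam*(norm b)^2"

lemma step_identity:
  fixes X U d e bn bS Bd cc :: "'a::real_inner"
  assumes g: "gam > 0" and bt: "\<beta> > 0"
  shows "(Qf gam lam (X+d) (U+e) - 2*((X+d) \<bullet> bS) + L*(d \<bullet> d))
     - (Qf gam lam X U - 2*(X \<bullet> bn) + L*w^2 - (Qf gam lam d e - (2*L + 1/(2*\<beta>)) * (d \<bullet> d)))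
   = - 2 * ((X + d) \<bullet> (-(1/gam) *\<^sub>R d - U - Bd + bS - bn - cc))
     - 2 * ((X + 2 *\<^sub>R d - lam *\<^sub>R e) \<bullet> (U + e))
     - 2 * ((X + d) \<bullet> Bd) - 2*(d \<bullet> bn) - 2*(X \<bullet> cc) - 2*(d \<bullet> cc) - L*(d \<bullet> d) - L*w^2 - (d \<bullet> d)/(2*\<beta>)"
  unfolding Qf_def power2_norm_eq_inner
  using g bt
  apply (simp add: inner_add_left inner_add_right inner_diff_left inner_diff_right inner_commute algebra_simps)
  by (simp add: field_simps)


lemma young_cc:
  fixes d cc :: "'a::real_inner"
  assumes bt: "\<beta> > 0"
  shows "- 2*(d \<bullet> cc) \<le> 2*(\<beta> * (cc \<bullet> cc)) + (d \<bullet> d)/(2*\<beta>)"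
proof -
  have "0 \<le> (d + (2*\<beta>) *\<^sub>R cc) \<bullet> (d + (2*\<beta>) *\<^sub>R cc)" by simp
  also have "\<dots> = d \<bullet> d + 4*\<beta>*(d \<bullet> cc) + 4*\<beta>^2*(cc \<bullet> cc)"
    by (simp add: inner_add_left inner_add_right inner_commute power2_eq_square algebra_simps)
  finally have "0 \<le> (d \<bullet> d + 4*\<beta>*(d \<bullet> cc) + 4*\<beta>^2*(cc \<bullet> cc)) / (2*\<beta>)" using bt by simp
  also have "\<dots> = (d \<bullet> d)/(2*\<beta>) + 2*(d \<bullet> cc) + 2*(\<beta> * (cc \<bullet> cc))"
    using bt by (simp add: field_simps power2_eq_square)
  finally show ?thesis by linarith
qed

lemma step_ineq:
  fixes X U d e bn bS Bd cc :: "'a::real_inner"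
  assumes g: "gam > 0" and bt: "\<beta> > 0" and L0: "L \<ge> 0" and w0: "w \<ge> 0"
    and i: "0 \<le> (X + d) \<bullet> (-(1/gam) *\<^sub>R d - U - Bd + bS - bn - cc)"
    and ii: "0 \<le> (X + 2 *\<^sub>R d - lam *\<^sub>R e) \<bullet> (U + e)"
    and iii: "0 \<le> (X + d) \<bullet> Bd"
    and iv: "\<beta> * (cc \<bullet> cc) \<le> X \<bullet> cc"
    and v: "\<bar>d \<bullet> bn\<bar> \<le> L * norm d * w"
  shows "Qf gam lam (X+d) (U+e) - 2*((X+d) \<bullet> bS) + L*(norm d)^2
     \<le> Qf gam lam X U - 2*(X \<bullet> bn) + L*w^2 - (Qf gam lam d e - (2*L + 1/(2*\<beta>)) * (norm d)^2)"
proof -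
  have nd: "(norm d)^2 = d \<bullet> d" by (simp add: power2_norm_eq_inner)
  have yb: "- 2*(d \<bullet> cc) \<le> 2*(\<beta> * (cc \<bullet> cc)) + (d \<bullet> d)/(2*\<beta>)" by (rule young_cc[OF bt])
  have "2 * (norm d * w) \<le> (norm d)^2 + w^2" using sum_squares_bound[of "norm d" w] by simp
  then have "L * (2 * (norm d * w)) \<le> L * ((norm d)^2 + w^2)" using L0 by (rule mult_left_mono)
  then have vb: "- 2*(d \<bullet> bn) \<le> L*(d \<bullet> d) + L*w^2" using v nd by (simp add: algebra_simps)
  show ?thesis unfolding nd
    using step_identity[OF g bt, where X=X and U=U and d=d and e=e and bn=bn and bS=bS and Bd=Bd and cc=cc and L=L and lam=lam and w=w] i ii iii iv vb yb by linarith
qed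

locale algo =
  fixes A1 A2 :: "'a::{real_inner, complete_space} \<Rightarrow> 'a set"
    and B C :: "'a \<Rightarrow> 'a"
    and L \<beta> lam gam :: real
    and xm1 x0 u0 :: 'a
    and x y u :: "nat \<Rightarrow> 'a"
  assumes A1: "maximally_monotone A1"
    and A2: "maximally_monotone A2"
    and Bmono: "monotone_fun B"
    and Lpos: "L > 0"
    and Blip: "L-lipschitz_on UNIV B"
    and betapos: "\<beta> > 0"
    and Ccoc: "cocoercive \<beta> C"
    and zne: "zer (op_sum4 A1 A2 B C) \<noteq> {}"
    and lampos: "lam > 0"
    and gampos: "gam > 0"
    and gamub: "gam < lam * \<beta> / (\<beta> + lam * (2 * \<beta> * L + 1))"
    and x_init: "x 0 = x0"
    and u_init: "u 0 = u0"
    and x_rec: "\<And>n. x (Suc n) = resolvent gam A2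
        (x n - gam *\<^sub>R u n
             - gam *\<^sub>R (2 *\<^sub>R B (x n) - B (if n = 0 then xm1 else x (n - 1)))
             - gam *\<^sub>R C (x n))"
    and y_rec: "\<And>n. y (Suc n) = resolvent lam A1 (2 *\<^sub>R x (Suc n) - x n + lam *\<^sub>R u n)"
    and u_rec: "\<And>n. u (Suc n) = u n + (1 / lam) *\<^sub>R (2 *\<^sub>R x (Suc n) - x n - y (Suc n))"
begin

definition "xp n = (if n = 0 then xm1 else x (n - 1))"
definition "aa n = (1/gam) *\<^sub>R (x n - x (Suc n)) - u n - (2 *\<^sub>R B (x n) - B (xp n)) - C (x n)"
definition "Sset = {(p,q). q \<in> A1 p \<and> - q - B p - C p \<in> A2 p}"

lemma xp_Suc[simp]: "xp (Suc n) = x n" by (simp add: xp_def)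

lemma aa_in: "aa n \<in> A2 (x (Suc n))"
proof -
  define w where "w = x n - gam *\<^sub>R u n - gam *\<^sub>R (2 *\<^sub>R B (x n) - B (xp n)) - gam *\<^sub>R C (x n)"
  have xs: "x (Suc n) = resolvent gam A2 w" unfolding w_def x_rec xp_def ..
  obtain a where a: "a \<in> A2 (x (Suc n))" "w = x (Suc n) + gam *\<^sub>R a"
    using resolvent_ex[OF A2 gampos, of w] unfolding xs[symmetric] by blast
  have "gam *\<^sub>R a = gam *\<^sub>R aa n"
  proof -
    have "gam *\<^sub>R a = w - x (Suc n)" using a(2) by simp
    also have "\<dots> = gam *\<^sub>R aa n" unfolding w_def aa_def using gampos by (simp add: algebra_simps)
    finally show ?thesis .
  qed
  then have "a = aa n" using gampos by simp
  then show ?thesis using a(1) by simp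
qed

lemma u_in: "u (Suc n) \<in> A1 (y (Suc n))"
proof -
  define w where "w = 2 *\<^sub>R x (Suc n) - x n + lam *\<^sub>R u n"
  obtain a where a: "a \<in> A1 (y (Suc n))" "w = y (Suc n) + lam *\<^sub>R a"
    using resolvent_ex[OF A1 lampos, of w] unfolding w_def y_rec[symmetric] by blast
  have "lam *\<^sub>R u (Suc n) = lam *\<^sub>R a"
  proof -
    have "lam *\<^sub>R u (Suc n) = lam *\<^sub>R u n + (2 *\<^sub>R x (Suc n) - x n - y (Suc n))"
      unfolding u_rec using lampos by (simp add: algebra_simps)
    also have "\<dots> = w - y (Suc n)" unfolding w_def by (simp add: algebra_simps)
    also have "\<dots> = lam *\<^sub>R a" using a(2) by simp
    finally show ?thesis .
  qed
  then have "u (Suc n) = a" using lampos by simp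
  then show ?thesis using a(1) by simp
qed

lemma y_eq: "y (Suc n) = 2 *\<^sub>R x (Suc n) - x n - lam *\<^sub>R (u (Suc n) - u n)"
proof -
  have "lam *\<^sub>R (u (Suc n) - u n) = 2 *\<^sub>R x (Suc n) - x n - y (Suc n)"
    unfolding u_rec using lampos by (simp add: algebra_simps)
  then show ?thesis by (simp add: algebra_simps)
qed

lemma B_lip: "norm (B a - B b) \<le> L * norm (a - b)"
  using lipschitz_onD[OF Blip, of a b] by (simp add: dist_norm)

lemma B_mono: "0 \<le> (a - b) \<bullet> (B a - B b)"
  using Bmono unfolding monotone_fun_def by blast

lemma C_coc: "\<beta> * ((C a - C b) \<bullet> (C a - C b)) \<le> (a - b) \<bullet> (C a - C b)"
  using Ccoc unfolding cocoercive_def by (simp add: power2_norm_eq_inner)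

lemma C_lip: "norm (C a - C b) \<le> (1/\<beta>) * norm (a - b)"
proof -
  have "\<beta> * (norm (C a - C b))^2 \<le> (a - b) \<bullet> (C a - C b)"
    using C_coc by (simp add: power2_norm_eq_inner)
  also have "\<dots> \<le> norm (a - b) * norm (C a - C b)" by (rule norm_cauchy_schwarz)
  finally have h: "\<beta> * (norm (C a - C b))^2 \<le> norm (a - b) * norm (C a - C b)" .
  show ?thesis
  proof (cases "norm (C a - C b) = 0")
    case True then show ?thesis using betapos by simp
  next
    case False
    then have "\<beta> * norm (C a - C b) \<le> norm (a - b)" using h
      by (simp add: power2_eq_square)
    then show ?thesis using betapos by (simp add: field_simps)
  qed
qed

lemma cond: "1/lam + 2*L + 1/\<beta> < 1/gam"
proof -
  have den: "\<beta> + lam * (2 * \<beta> * L + 1) > 0" using betapos lampos Lpos by (simp add: add_pos_pos)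
  have h: "gam * (\<beta> + lam * (2 * \<beta> * L + 1)) < lam * \<beta>" using gamub den by (simp add: field_simps)
  have "(\<beta> + lam * (2 * \<beta> * L + 1)) / (lam * \<beta>) < 1/gam"
    using h gampos lampos betapos by (simp add: field_simps)
  moreover have "(\<beta> + lam * (2 * \<beta> * L + 1)) / (lam * \<beta>) = 1/lam + 2*L + 1/\<beta>"
    using lampos betapos by (simp add: field_simps)
  ultimately show ?thesis by simp
qed

definition "Phi p q n = Qf gam lam (x n - p) (u n - q) - 2*((x n - p) \<bullet> (B (x n) - B (xp n))) + L*(norm (x n - xp n))^2"
definition "Rr n = Qf gam lam (x (Suc n) - x n) (u (Suc n) - u n) - (2*L + 1/(2*\<beta>))*(norm (x (Suc n) - x n))^2"

lemma phi_step:
  assumes pq: "(p, q) \<in> Sset"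
  shows "Phi p q (Suc n) \<le> Phi p q n - Rr n"
proof -
  have q1: "q \<in> A1 p" and q2: "- q - B p - C p \<in> A2 p" using pq unfolding Sset_def by auto
  define X where "X = x n - p"
  define U where "U = u n - q"
  define d where "d = x (Suc n) - x n"
  define e where "e = u (Suc n) - u n"
  define bn where "bn = B (x n) - B (xp n)"
  define bS where "bS = B (x (Suc n)) - B (x n)"
  define Bd where "Bd = B (x (Suc n)) - B p"
  define cc where "cc = C (x n) - C p"
  define w where "w = norm (x n - xp n)"
  have Xd: "X + d = x (Suc n) - p" unfolding X_def d_def by simp
  have Ue: "U + e = u (Suc n) - q" unfolding U_def e_def by simp
  have i: "0 \<le> (X + d) \<bullet> (-(1/gam) *\<^sub>R d - U - Bd + bS - bn - cc)"
  proof -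
    have "-(1/gam) *\<^sub>R d - U - Bd + bS - bn - cc = aa n - (- q - B p - C p)"
      unfolding d_def U_def Bd_def bS_def bn_def cc_def aa_def by (simp add: algebra_simps scaleR_2)
    then show ?thesis unfolding Xd using maxmono_monotone[OF A2 aa_in q2] by simp
  qed
  have ii: "0 \<le> (X + 2 *\<^sub>R d - lam *\<^sub>R e) \<bullet> (U + e)"
  proof -
    have "X + 2 *\<^sub>R d - lam *\<^sub>R e = y (Suc n) - p"
      unfolding X_def d_def e_def y_eq by (simp add: algebra_simps scaleR_2)
    then show ?thesis unfolding Ue using maxmono_monotone[OF A1 u_in q1] by simp
  qed
  have iii: "0 \<le> (X + d) \<bullet> Bd" unfolding Xd Bd_def by (rule B_mono)
  have iv: "\<beta> * (cc \<bullet> cc) \<le> X \<bullet> cc" unfolding X_def cc_def by (rule C_coc)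
  have v: "\<bar>d \<bullet> bn\<bar> \<le> L * norm d * w"
  proof -
    have "\<bar>d \<bullet> bn\<bar> \<le> norm d * norm bn" by (rule Cauchy_Schwarz_ineq2)
    also have "\<dots> \<le> norm d * (L * w)" unfolding bn_def w_def by (intro mult_left_mono B_lip) auto
    finally show ?thesis by (simp add: algebra_simps)
  qed
  have "Qf gam lam (X+d) (U+e) - 2*((X+d) \<bullet> bS) + L*(norm d)^2
     \<le> Qf gam lam X U - 2*(X \<bullet> bn) + L*w^2 - (Qf gam lam d e - (2*L + 1/(2*\<beta>)) * (norm d)^2)"
    by (rule step_ineq[OF gampos betapos _ _ i ii iii iv v]) (use Lpos in \<open>auto simp: w_def\<close>)
  then show ?thesis
    unfolding Phi_def Rr_def Xd Ue unfolding X_def U_def d_def e_def bS_def bn_def w_def by simp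
qed

end

lemma quad_lb1:
  fixes X U :: "'a::real_inner"
  assumes "lam > 0"
  shows "(k - 1/lam)*(norm X)^2 \<le> k*(norm X)^2 - 2*(X \<bullet> U) + lam*(norm U)^2"
proof -
  have "0 \<le> lam * ((U - (1/lam) *\<^sub>R X) \<bullet> (U - (1/lam) *\<^sub>R X))" using assms by simp
  also have "\<dots> = lam*(norm U)^2 - 2*(X \<bullet> U) + (norm X)^2/lam"
    using assms unfolding power2_norm_eq_inner
    by (simp add: inner_diff_left inner_diff_right inner_commute algebra_simps)
  finally show ?thesis by (simp add: algebra_simps divide_inverse)
qed

lemma quad_lb2:
  fixes X U :: "'a::real_inner"
  assumes "k > 0"
  shows "(lam - 1/k)*(norm U)^2 \<le> k*(norm X)^2 - 2*(X \<bullet> U) + lam*(norm U)^2"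
proof -
  have "0 \<le> k * ((X - (1/k) *\<^sub>R U) \<bullet> (X - (1/k) *\<^sub>R U))" using assms by simp
  also have "\<dots> = k*(norm X)^2 - 2*(X \<bullet> U) + (norm U)^2/k"
    using assms unfolding power2_norm_eq_inner
    by (simp add: inner_diff_left inner_diff_right inner_commute algebra_simps)
  finally show ?thesis by (simp add: algebra_simps divide_inverse)
qed

lemma norm_le_sq1: "norm (v::'a::real_normed_vector) \<le> (norm v)^2 + 1"
proof -
  have "0 \<le> (norm v - 1/2)^2 + 3/4" by (simp add: add_nonneg_nonneg)
  then show ?thesis by (simp add: power2_eq_square algebra_simps)
qed

context algo
begin

definition "c1 = 1/gam - L - 1/lam"
definition "c2 = lam - 1/(1/gam - L)"
definition "k3 = 1/gam - 2*L - 1/(2*\<beta>)"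
definition "c3 = k3 - 1/lam"
definition "c4 = lam - 1/k3"

lemma consts_pos: "c1 > 0" "c2 > 0" "c3 > 0" "c4 > 0" "1/gam - L > 0" "k3 > 0"
proof -
  have cnd: "1/lam + 2*L + 1/\<beta> < 1/gam" by (rule cond)
  have il: "1/lam > 0" "1/\<beta> > 0" using lampos betapos by auto
  show a: "c1 > 0" unfolding c1_def using cnd il Lpos by linarith
  show b: "1/gam - L > 0" using cnd il Lpos by linarith
  have "1/lam < 1/gam - L" using cnd il Lpos by linarith
  then have "1/(1/gam - L) < 1/(1/lam)" using il b by (intro divide_strict_left_mono) (auto intro!: mult_pos_pos)
  then show "c2 > 0" unfolding c2_def using lampos by simp
  have "1/(2*\<beta>) < 1/\<beta>" using betapos by (simp add: field_simps)
  then have k3l: "1/lam < k3" unfolding k3_def using cnd Lpos by linarith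
  then show "c3 > 0" unfolding c3_def by simp
  show k3p: "k3 > 0" using k3l il by linarith
  have "1/k3 < 1/(1/lam)" using k3l il k3p by (intro divide_strict_left_mono) (auto intro!: mult_pos_pos)
  then show "c4 > 0" unfolding c4_def using lampos by simp
qed

lemma Rr_lb: "c3 * (norm (x (Suc n) - x n))^2 \<le> Rr n" "c4 * (norm (u (Suc n) - u n))^2 \<le> Rr n"
proof -
  have eq: "Rr n = k3*(norm (x (Suc n) - x n))^2 - 2*((x (Suc n) - x n) \<bullet> (u (Suc n) - u n)) + lam*(norm (u (Suc n) - u n))^2"
    unfolding Rr_def Qf_def k3_def by (simp add: field_simps)
  show "c3 * (norm (x (Suc n) - x n))^2 \<le> Rr n" unfolding eq c3_def by (rule quad_lb1[OF lampos])
  show "c4 * (norm (u (Suc n) - u n))^2 \<le> Rr n" unfolding eq c4_def by (rule quad_lb2) (use consts_pos in auto)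
qed

lemma Rr_nonneg: "0 \<le> Rr n"
proof -
  have "0 \<le> c3 * (norm (x (Suc n) - x n))^2" using consts_pos(3) by simp
  then show ?thesis using Rr_lb(1)[of n] by linarith
qed

lemma Phi_lb:
  shows "c1 * (norm (x n - p))^2 \<le> Phi p q n" "c2 * (norm (u n - q))^2 \<le> Phi p q n"
proof -
  define X where "X = x n - p"
  define U where "U = u n - q"
  define w where "w = norm (x n - xp n)"
  have "\<bar>X \<bullet> (B (x n) - B (xp n))\<bar> \<le> norm X * norm (B (x n) - B (xp n))"
    by (rule Cauchy_Schwarz_ineq2)
  also have "\<dots> \<le> norm X * (L * w)" unfolding w_def by (intro mult_left_mono B_lip) auto
  finally have a1: "X \<bullet> (B (x n) - B (xp n)) \<le> L * (norm X * w)" by (simp add: algebra_simps)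
  have "2 * (norm X * w) \<le> (norm X)^2 + w^2" using sum_squares_bound[of "norm X" w] by simp
  then have "L * (2 * (norm X * w)) \<le> L * ((norm X)^2 + w^2)" using Lpos by (intro mult_left_mono) auto
  then have a2: "2 * (L * (norm X * w)) \<le> L * (norm X)^2 + L * w^2" by (simp add: algebra_simps)
  have h: "- 2*(X \<bullet> (B (x n) - B (xp n))) + L*w^2 \<ge> - (L * (norm X)^2)"
    using a1 a2 by linarith
  have P: "Phi p q n \<ge> (1/gam - L)*(norm X)^2 - 2*(X \<bullet> U) + lam*(norm U)^2"
    using h unfolding Phi_def Qf_def X_def U_def w_def by (simp add: algebra_simps divide_inverse)
  show "c1 * (norm (x n - p))^2 \<le> Phi p q n"
    using quad_lb1[OF lampos, where k="1/gam - L" and X=X and U=U] P unfolding c1_def X_def by (simp add: algebra_simps)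
  show "c2 * (norm (u n - q))^2 \<le> Phi p q n"
    using quad_lb2[OF consts_pos(5), where lam=lam and X=X and U=U] P unfolding c2_def U_def by (simp add: algebra_simps)
qed

lemma Phi_nonneg: "0 \<le> Phi p q n"
proof -
  have "0 \<le> c1 * (norm (x n - p))^2" using consts_pos(1) by simp
  then show ?thesis using Phi_lb(1)[of n p q] by linarith
qed

lemma Phi_sum:
  assumes pq: "(p, q) \<in> Sset"
  shows "(\<Sum>k<n. Rr k) \<le> Phi p q 0 - Phi p q n"
proof (induction n)
  case 0 then show ?case by simp
next
  case (Suc n) then show ?case using phi_step[OF pq, of n] by simp
qed

lemma Phi_le0: assumes pq: "(p, q) \<in> Sset" shows "Phi p q n \<le> Phi p q 0"
  using Phi_sum[OF pq, of n] sum_nonneg[of "{..<n}" Rr] Rr_nonneg by force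

lemma Sset_ne: "Sset \<noteq> {}"
proof -
  obtain z where "z \<in> zer (op_sum4 A1 A2 B C)" using zne by blast
  then obtain a1 a2 where "0 = a1 + a2 + B z + C z" "a1 \<in> A1 z" "a2 \<in> A2 z"
    unfolding zer_def op_sum4_def by auto
  moreover have "- a1 - B z - C z = a2 - (a1 + a2 + B z + C z)" by (simp add: algebra_simps)
  ultimately have "(z, a1) \<in> Sset" unfolding Sset_def by simp
  then show ?thesis by blast
qed

lemma Sset_zer:
  assumes "(p, q) \<in> Sset" shows "p \<in> zer (op_sum4 A1 A2 B C)"
proof -
  have h: "q \<in> A1 p" "- q - B p - C p \<in> A2 p" using assms unfolding Sset_def by auto
  have "0 = q + (- q - B p - C p) + B p + C p" by simp
  then show ?thesis unfolding zer_def op_sum4_def using h by blast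
qed

end

lemma sq_summable_zero:
  fixes f :: "nat \<Rightarrow> 'a::real_normed_vector"
  assumes c: "c > 0" and fr: "\<And>n. c * (norm (f n))^2 \<le> r n" and sr: "\<And>n. (\<Sum>k<n. r k) \<le> M"
  shows "f \<longlonglongrightarrow> 0"
proof -
  have "summable (\<lambda>n. (norm (f n))^2)"
  proof (rule summableI_nonneg_bounded[where x="M/c"])
    fix n
    have "(\<Sum>k<n. (norm (f k))^2) = (\<Sum>k<n. c * (norm (f k))^2) / c" using c by (simp add: sum_divide_distrib)
    also have "\<dots> \<le> (\<Sum>k<n. r k) / c" using c by (intro divide_right_mono sum_mono fr) auto
    also have "\<dots> \<le> M / c" using c by (intro divide_right_mono sr) auto
    finally show "(\<Sum>k<n. (norm (f k))^2) \<le> M / c" .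
  qed simp
  then have "(\<lambda>n. (norm (f n))^2) \<longlonglongrightarrow> 0" by (rule summable_LIMSEQ_zero)
  then have "(\<lambda>n. sqrt ((norm (f n))^2)) \<longlonglongrightarrow> sqrt 0" by (intro tendsto_intros)
  then have "(\<lambda>n. norm (f n)) \<longlonglongrightarrow> 0" by simp
  then show ?thesis by (simp add: tendsto_norm_zero_iff)
qed

lemma norm_bound_from_sq:
  fixes v :: "'a::real_normed_vector"
  assumes "c > 0" "c * (norm v)^2 \<le> M"
  shows "norm v \<le> M / c + 1"
proof -
  have "(norm v)^2 \<le> M / c" using assms by (simp add: field_simps mult.commute)
  then show ?thesis using norm_le_sq1[of v] by linarith
qed

context algo
begin

definition "P0 = (SOME z. z \<in> Sset)"
lemma P0_in: "P0 \<in> Sset" unfolding P0_def using Sset_ne some_in_eq by blast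

lemma Rsum_bound: "(\<Sum>k<n. Rr k) \<le> Phi (fst P0) (snd P0) 0"
proof -
  have "(fst P0, snd P0) \<in> Sset" using P0_in by simp
  from Phi_sum[OF this, of n] Phi_nonneg[of "fst P0" "snd P0" n] show ?thesis by linarith
qed

lemma d_zero: "(\<lambda>n. x (Suc n) - x n) \<longlonglongrightarrow> 0"
  by (rule sq_summable_zero[OF consts_pos(3), where r=Rr]) (rule Rr_lb(1), rule Rsum_bound)

lemma e_zero: "(\<lambda>n. u (Suc n) - u n) \<longlonglongrightarrow> 0"
  by (rule sq_summable_zero[OF consts_pos(4), where r=Rr]) (rule Rr_lb(2), rule Rsum_bound)

lemma x_bounded: "\<exists>K. \<forall>n. norm (x n) \<le> K"
proof -
  obtain p q where pq: "(p, q) \<in> Sset" using P0_in by (metis prod.collapse)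
  have "norm (x n - p) \<le> Phi p q 0 / c1 + 1" for n
  proof -
    have "c1 * (norm (x n - p))^2 \<le> Phi p q 0" using Phi_lb(1)[of n p q] Phi_le0[OF pq, of n] by linarith
    then show ?thesis by (rule norm_bound_from_sq[OF consts_pos(1)])
  qed
  then have "norm (x n) \<le> norm p + (Phi p q 0 / c1 + 1)" for n
    using norm_triangle_ineq2[of "x n" p] by (smt (verit) norm_minus_commute)
  then show ?thesis by blast
qed

lemma u_bounded: "\<exists>K. \<forall>n. norm (u n) \<le> K"
proof -
  obtain p q where pq: "(p, q) \<in> Sset" using P0_in by (metis prod.collapse)
  have "norm (u n - q) \<le> Phi p q 0 / c2 + 1" for n
  proof -
    have "c2 * (norm (u n - q))^2 \<le> Phi p q 0" using Phi_lb(2)[where n=n and p=p and q=q] Phi_le0[OF pq, of n] by linarith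
    then show ?thesis by (rule norm_bound_from_sq[OF consts_pos(2)])
  qed
  then have "norm (u n) \<le> norm q + (Phi p q 0 / c2 + 1)" for n
    using norm_triangle_ineq2[of "u n" q] by (smt (verit) norm_minus_commute)
  then show ?thesis by blast
qed

lemma Q_conv:
  assumes pq: "(p, q) \<in> Sset"
  shows "convergent (\<lambda>n. Qf gam lam (x n - p) (u n - q))"
proof -
  have "decseq (Phi p q)"
  proof (rule decseq_SucI)
    fix n show "Phi p q (Suc n) \<le> Phi p q n" using phi_step[OF pq, of n] Rr_nonneg[of n] by linarith
  qed
  moreover have "\<forall>i. 0 \<le> Phi p q i" using Phi_nonneg by blast
  ultimately obtain l where l: "Phi p q \<longlonglongrightarrow> l" by (rule decseq_convergent)
  obtain K where K: "\<And>n. norm (x n) \<le> K" using x_bounded by blast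
  have dz: "(\<lambda>n. norm (x (Suc n) - x n)) \<longlonglongrightarrow> 0" using d_zero by (simp add: tendsto_norm_zero_iff)
  have mid: "(\<lambda>n. (x (Suc n) - p) \<bullet> (B (x (Suc n)) - B (x n))) \<longlonglongrightarrow> 0"
  proof (rule Lim_null_comparison)
    show "\<forall>\<^sub>F n in sequentially. norm ((x (Suc n) - p) \<bullet> (B (x (Suc n)) - B (x n))) \<le> (K + norm p) * L * norm (x (Suc n) - x n)"
    proof (intro always_eventually allI)
      fix n
      have "norm ((x (Suc n) - p) \<bullet> (B (x (Suc n)) - B (x n))) \<le> norm (x (Suc n) - p) * norm (B (x (Suc n)) - B (x n))"
        using Cauchy_Schwarz_ineq2 by (simp only: real_norm_def)
      also have "\<dots> \<le> (K + norm p) * (L * norm (x (Suc n) - x n))"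
      proof (intro mult_mono B_lip)
        show "norm (x (Suc n) - p) \<le> K + norm p" using K[of "Suc n"] norm_triangle_ineq4[of "x (Suc n)" p] by linarith
        show "0 \<le> K + norm p" using K[of 0] norm_ge_zero[of "x 0"] norm_ge_zero[of p] by linarith
      qed simp
      finally show "norm ((x (Suc n) - p) \<bullet> (B (x (Suc n)) - B (x n))) \<le> (K + norm p) * L * norm (x (Suc n) - x n)"
        by (simp add: mult.assoc)
    qed
    show "(\<lambda>n. (K + norm p) * L * norm (x (Suc n) - x n)) \<longlonglongrightarrow> 0"
      using tendsto_mult_right_zero[OF dz] by simp
  qed
  have "(\<lambda>n. Phi p q (Suc n) + 2 * ((x (Suc n) - p) \<bullet> (B (x (Suc n)) - B (x n))) - L * (norm (x (Suc n) - x n))^2)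
        \<longlonglongrightarrow> l + 0 - 0"
  proof (intro tendsto_diff tendsto_add)
    show "(\<lambda>n. Phi p q (Suc n)) \<longlonglongrightarrow> l" by (rule LIMSEQ_Suc[OF l])
    show "(\<lambda>n. 2 * ((x (Suc n) - p) \<bullet> (B (x (Suc n)) - B (x n)))) \<longlonglongrightarrow> 0"
      by (rule tendsto_mult_right_zero[OF mid])
    have "(\<lambda>n. (norm (x (Suc n) - x n))^2) \<longlonglongrightarrow> 0^2" by (rule tendsto_power[OF dz])
    then have "(\<lambda>n. (norm (x (Suc n) - x n))^2) \<longlonglongrightarrow> 0" by simp
    then show "(\<lambda>n. L * (norm (x (Suc n) - x n))^2) \<longlonglongrightarrow> 0"
      by (rule tendsto_mult_right_zero)
  qed
  moreover have "Phi p q (Suc n) + 2 * ((x (Suc n) - p) \<bullet> (B (x (Suc n)) - B (x n))) - L * (norm (x (Suc n) - x n))^2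
       = Qf gam lam (x (Suc n) - p) (u (Suc n) - q)" for n
    unfolding Phi_def by simp
  ultimately have "(\<lambda>n. Qf gam lam (x (Suc n) - p) (u (Suc n) - q)) \<longlonglongrightarrow> l" by simp
  then have "(\<lambda>n. Qf gam lam (x n - p) (u n - q)) \<longlonglongrightarrow> l" by (rule LIMSEQ_imp_Suc)
  then show ?thesis by (auto simp: convergent_def)
qed

end

lemma wc_subseq: "weakly_converges s l \<Longrightarrow> strict_mono r \<Longrightarrow> weakly_converges (s \<circ> r) l"
  unfolding weakly_converges_def using LIMSEQ_subseq_LIMSEQ by (fastforce simp: o_def)

lemma wc_diff:
  assumes "weakly_converges s l" "(\<lambda>n. t n - s n) \<longlonglongrightarrow> 0"
  shows "weakly_converges t l"
  unfolding weakly_converges_def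
proof
  fix z
  have h1: "(\<lambda>n. s n \<bullet> z) \<longlonglongrightarrow> l \<bullet> z" using assms(1) unfolding weakly_converges_def by blast
  have h2: "(\<lambda>n. (t n - s n) \<bullet> z) \<longlonglongrightarrow> 0 \<bullet> z" by (intro tendsto_inner tendsto_const assms(2))
  have "(\<lambda>n. s n \<bullet> z + (t n - s n) \<bullet> z) \<longlonglongrightarrow> l \<bullet> z + 0 \<bullet> z" by (rule tendsto_add[OF h1 h2])
  then show "(\<lambda>n. t n \<bullet> z) \<longlonglongrightarrow> l \<bullet> z" by (simp add: inner_diff_left)
qed

lemma null_bounded_inner:
  fixes s f :: "nat \<Rightarrow> 'a::real_inner"
  assumes "\<And>n. norm (s n) \<le> K" "f \<longlonglongrightarrow> 0"
  shows "(\<lambda>n. s n \<bullet> f n) \<longlonglongrightarrow> 0"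
proof (rule Lim_null_comparison)
  show "\<forall>\<^sub>F n in sequentially. norm (s n \<bullet> f n) \<le> K * norm (f n)"
  proof (intro always_eventually allI)
    fix n
    have "norm (s n \<bullet> f n) \<le> norm (s n) * norm (f n)" using Cauchy_Schwarz_ineq2 by (simp only: real_norm_def)
    also have "\<dots> \<le> K * norm (f n)" using assms(1)[of n] by (intro mult_right_mono) auto
    finally show "norm (s n \<bullet> f n) \<le> K * norm (f n)" .
  qed
  have "(\<lambda>n. norm (f n)) \<longlonglongrightarrow> 0" using assms(2) by (simp add: tendsto_norm_zero_iff)
  then show "(\<lambda>n. K * norm (f n)) \<longlonglongrightarrow> 0" by (rule tendsto_mult_right_zero)
qed

lemma null_comparison_norm:
  fixes f :: "nat \<Rightarrow> 'a::real_normed_vector" and g :: "nat \<Rightarrow> 'b::real_normed_vector"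
  assumes "\<And>n. norm (f n) \<le> c * norm (g n)" "g \<longlonglongrightarrow> 0"
  shows "f \<longlonglongrightarrow> 0"
proof (rule Lim_null_comparison)
  show "\<forall>\<^sub>F n in sequentially. norm (f n) \<le> c * norm (g n)" using assms(1) by simp
  have "(\<lambda>n. norm (g n)) \<longlonglongrightarrow> 0" using assms(2) by (simp add: tendsto_norm_zero_iff)
  then show "(\<lambda>n. c * norm (g n)) \<longlonglongrightarrow> 0" by (rule tendsto_mult_right_zero)
qed

lemma demi_core:
  fixes X Y U E :: "nat \<Rightarrow> 'a::real_inner"
  assumes wX: "weakly_converges X xb" and wU: "weakly_converges U ub"
    and YX: "(\<lambda>k. Y k - X k) \<longlonglongrightarrow> 0" and E0: "E \<longlonglongrightarrow> 0"
    and bX: "\<And>k. norm (X k) \<le> KX" and bU: "\<And>k. norm (U k) \<le> KU"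
    and ineq: "\<And>k. 0 \<le> (X k - pp) \<bullet> E k - (X k - pp) \<bullet> U k - (X k - pp) \<bullet> c + (Y k - qq) \<bullet> (U k - v)"
  shows "0 \<le> (xb - pp) \<bullet> (- ub - c) + (xb - qq) \<bullet> (ub - v)"
proof -
  have eq: "(X k - pp) \<bullet> E k - (X k - pp) \<bullet> U k - (X k - pp) \<bullet> c + (Y k - qq) \<bullet> (U k - v)
    = (X k \<bullet> E k - pp \<bullet> E k) + (U k \<bullet> (Y k - X k)) + (U k \<bullet> (pp - qq)) - X k \<bullet> (c + v) + pp \<bullet> c
      - (Y k - X k) \<bullet> v + qq \<bullet> v" for k
    by (simp add: inner_diff_left inner_diff_right inner_add_right inner_commute algebra_simps)
  have "(\<lambda>k. (X k \<bullet> E k - pp \<bullet> E k) + (U k \<bullet> (Y k - X k)) + (U k \<bullet> (pp - qq)) - X k \<bullet> (c + v) + pp \<bullet> c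
      - (Y k - X k) \<bullet> v + qq \<bullet> v) \<longlonglongrightarrow> (0 - pp \<bullet> 0) + 0 + ub \<bullet> (pp - qq) - xb \<bullet> (c + v) + pp \<bullet> c - 0 \<bullet> v + qq \<bullet> v"
  proof -
    have f1: "(\<lambda>k. X k \<bullet> E k) \<longlonglongrightarrow> 0" by (rule null_bounded_inner[OF bX E0])
    have f2: "(\<lambda>k. pp \<bullet> E k) \<longlonglongrightarrow> pp \<bullet> 0" by (intro tendsto_inner tendsto_const E0)
    have f3: "(\<lambda>k. U k \<bullet> (Y k - X k)) \<longlonglongrightarrow> 0" by (rule null_bounded_inner[OF bU YX])
    have f4: "(\<lambda>k. U k \<bullet> (pp - qq)) \<longlonglongrightarrow> ub \<bullet> (pp - qq)" using wU unfolding weakly_converges_def by blast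
    have f5: "(\<lambda>k. X k \<bullet> (c + v)) \<longlonglongrightarrow> xb \<bullet> (c + v)" using wX unfolding weakly_converges_def by blast
    have f7: "(\<lambda>k. (Y k - X k) \<bullet> v) \<longlonglongrightarrow> 0 \<bullet> v" by (intro tendsto_inner tendsto_const YX)
    show ?thesis
      by (intro tendsto_add tendsto_diff f1 f2 f3 f4 f5 f7 tendsto_const)
  qed
  then have "0 \<le> (0 - pp \<bullet> 0) + 0 + ub \<bullet> (pp - qq) - xb \<bullet> (c + v) + pp \<bullet> c - 0 \<bullet> v + qq \<bullet> v"
    using ineq unfolding eq[symmetric] by (intro LIMSEQ_le_const) auto
  moreover have "(0 - pp \<bullet> 0) + 0 + ub \<bullet> (pp - qq) - xb \<bullet> (c + v) + pp \<bullet> c - 0 \<bullet> v + qq \<bullet> v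
     = (xb - pp) \<bullet> (- ub - c) + (xb - qq) \<bullet> (ub - v)"
    by (simp add: inner_diff_left inner_diff_right inner_add_right inner_commute algebra_simps)
  ultimately show ?thesis by simp
qed

context algo
begin

lemma C_mono: "0 \<le> (a - b) \<bullet> (C a - C b)"
proof -
  have "0 \<le> \<beta> * ((C a - C b) \<bullet> (C a - C b))" using betapos by simp
  then show ?thesis using C_coc[of a b] by linarith
qed

lemma E_zero: "(\<lambda>m. aa m + u (Suc m) + B (x (Suc m)) + C (x (Suc m))) \<longlonglongrightarrow> 0"
proof -
  have eq: "aa m + u (Suc m) + B (x (Suc m)) + C (x (Suc m))
     = - (1/gam) *\<^sub>R (x (Suc m) - x m) + (u (Suc m) - u m) + (B (x (Suc m)) - B (x m))
       - (B (x m) - B (xp m)) + (C (x (Suc m)) - C (x m))" for m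
    unfolding aa_def by (simp add: algebra_simps scaleR_2)
  have dz: "(\<lambda>m. x (Suc m) - x m) \<longlonglongrightarrow> 0" by (rule d_zero)
  have t1: "(\<lambda>m. - (1/gam) *\<^sub>R (x (Suc m) - x m)) \<longlonglongrightarrow> 0"
    using tendsto_scaleR[OF tendsto_const dz, of "- (1/gam)"] by simp
  have t3: "(\<lambda>m. B (x (Suc m)) - B (x m)) \<longlonglongrightarrow> 0"
    by (rule null_comparison_norm[OF B_lip dz])
  have xpz: "(\<lambda>m. x m - xp m) \<longlonglongrightarrow> 0"
    by (rule LIMSEQ_imp_Suc) (simp add: dz)
  have t4: "(\<lambda>m. B (x m) - B (xp m)) \<longlonglongrightarrow> 0"
    by (rule null_comparison_norm[OF B_lip xpz])
  have t5: "(\<lambda>m. C (x (Suc m)) - C (x m)) \<longlonglongrightarrow> 0"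
    by (rule null_comparison_norm[OF C_lip dz])
  have "(\<lambda>m. - (1/gam) *\<^sub>R (x (Suc m) - x m) + (u (Suc m) - u m) + (B (x (Suc m)) - B (x m))
       - (B (x m) - B (xp m)) + (C (x (Suc m)) - C (x m))) \<longlonglongrightarrow> 0 + 0 + 0 - 0 + 0"
    by (intro tendsto_add tendsto_diff t1 e_zero t3 t4 t5)
  then show ?thesis unfolding eq by simp
qed

lemma cluster:
  assumes r: "strict_mono r" and wx: "weakly_converges (x \<circ> r) xb" and wu: "weakly_converges (u \<circ> r) ub"
  shows "(xb, ub) \<in> Sset"
proof -
  define X where "X k = x (Suc (r k))" for k
  define U where "U k = u (Suc (r k))" for k
  define Y where "Y k = y (Suc (r k))" for k
  define E where "E k = aa (r k) + U k + B (X k) + C (X k)" for k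
  have dr: "(\<lambda>k. x (Suc (r k)) - x (r k)) \<longlonglongrightarrow> 0"
    using LIMSEQ_subseq_LIMSEQ[OF d_zero r] by (simp add: o_def)
  have er: "(\<lambda>k. u (Suc (r k)) - u (r k)) \<longlonglongrightarrow> 0"
    using LIMSEQ_subseq_LIMSEQ[OF e_zero r] by (simp add: o_def)
  have wX: "weakly_converges X xb" unfolding X_def
    by (rule wc_diff[OF wx]) (simp add: o_def dr)
  have wU: "weakly_converges U ub" unfolding U_def
    by (rule wc_diff[OF wu]) (simp add: o_def er)
  have YX: "(\<lambda>k. Y k - X k) \<longlonglongrightarrow> 0"
  proof -
    have "Y k - X k = (x (Suc (r k)) - x (r k)) - lam *\<^sub>R (u (Suc (r k)) - u (r k))" for k
      unfolding Y_def X_def y_eq by (simp add: algebra_simps scaleR_2)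
    moreover have "(\<lambda>k. (x (Suc (r k)) - x (r k)) - lam *\<^sub>R (u (Suc (r k)) - u (r k))) \<longlonglongrightarrow> 0 - lam *\<^sub>R 0"
      by (intro tendsto_diff tendsto_scaleR tendsto_const dr er)
    ultimately show ?thesis by simp
  qed
  have E0: "E \<longlonglongrightarrow> 0"
    using LIMSEQ_subseq_LIMSEQ[OF E_zero r] unfolding E_def X_def U_def by (simp add: o_def)
  obtain KX where KX: "\<And>n. norm (x n) \<le> KX" using x_bounded by blast
  obtain KU where KU: "\<And>n. norm (u n) \<le> KU" using u_bounded by blast
  have star: "0 \<le> (xb - pp) \<bullet> (- ub - (a + B pp + C pp)) + (xb - qq) \<bullet> (ub - v)"
    if a: "a \<in> A2 pp" and v: "v \<in> A1 qq" for pp a qq v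
  proof (rule demi_core[OF wX wU YX E0])
    show "norm (X k) \<le> KX" for k unfolding X_def by (rule KX)
    show "norm (U k) \<le> KU" for k unfolding U_def by (rule KU)
    fix k
    have m1: "0 \<le> (X k - pp) \<bullet> (aa (r k) - a)" unfolding X_def using maxmono_monotone[OF A2 aa_in a] .
    have m2: "0 \<le> (X k - pp) \<bullet> (B (X k) - B pp)" by (rule B_mono)
    have m3: "0 \<le> (X k - pp) \<bullet> (C (X k) - C pp)" by (rule C_mono)
    have m4: "0 \<le> (Y k - qq) \<bullet> (U k - v)" unfolding Y_def U_def using maxmono_monotone[OF A1 u_in v] .
    have "(X k - pp) \<bullet> E k - (X k - pp) \<bullet> U k - (X k - pp) \<bullet> (a + B pp + C pp)
        = (X k - pp) \<bullet> (aa (r k) - a) + (X k - pp) \<bullet> (B (X k) - B pp) + (X k - pp) \<bullet> (C (X k) - C pp)"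
      unfolding E_def by (simp add: inner_diff_right inner_add_right algebra_simps)
    then show "0 \<le> (X k - pp) \<bullet> E k - (X k - pp) \<bullet> U k - (X k - pp) \<bullet> (a + B pp + C pp) + (Y k - qq) \<bullet> (U k - v)"
      using m1 m2 m3 m4 by linarith
  qed
  have step1: "0 \<le> (xb - pp) \<bullet> (- ub - (a + B pp + C pp))" if a: "a \<in> A2 pp" for pp a
  proof -
    obtain v where v: "v \<in> A1 (resolvent 1 A1 (xb + ub))" "xb + ub = resolvent 1 A1 (xb + ub) + 1 *\<^sub>R v"
      using resolvent_ex[OF A1, of 1 "xb + ub"] by auto
    define qq where "qq = resolvent 1 A1 (xb + ub)"
    have "xb - qq = v - ub" using v(2) unfolding qq_def by (simp add: algebra_simps)
    then have "(xb - qq) \<bullet> (ub - v) \<le> 0"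
      by (metis inner_ge_zero inner_minus_right minus_diff_eq neg_le_0_iff_le)
    then show ?thesis using star[OF a v(1)[folded qq_def]] by linarith
  qed
  define LD where "LD = L + 1/\<beta>"
  have LDp: "LD > 0" unfolding LD_def using Lpos betapos by (simp add: add_pos_pos)
  define t where "t = 1/(2*LD)"
  have tp: "t > 0" unfolding t_def using LDp by simp
  define D where "D z = B z + C z" for z
  have Dlip: "norm (D a - D b) \<le> LD * norm (a - b)" for a b
  proof -
    have "norm (D a - D b) \<le> norm (B a - B b) + norm (C a - C b)"
      unfolding D_def by (metis (no_types, lifting) add_diff_add norm_triangle_ineq)
    also have "\<dots> \<le> L * norm (a - b) + (1/\<beta>) * norm (a - b)" by (intro add_mono B_lip C_lip)
    finally show ?thesis unfolding LD_def by (simp add: algebra_simps)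
  qed
  obtain a where a: "a \<in> A2 (resolvent t A2 (xb - t *\<^sub>R (ub + D xb)))"
     "xb - t *\<^sub>R (ub + D xb) = resolvent t A2 (xb - t *\<^sub>R (ub + D xb)) + t *\<^sub>R a"
    using resolvent_ex[OF A2 tp] by blast
  define pp where "pp = resolvent t A2 (xb - t *\<^sub>R (ub + D xb))"
  have a1: "a \<in> A2 pp" using a(1) unfolding pp_def .
  have xp: "xb - pp = t *\<^sub>R (a + ub + D xb)" using a(2) unfolding pp_def[symmetric]
    by (simp add: algebra_simps)
  have s1: "0 \<le> (xb - pp) \<bullet> (- ub - (a + D pp))" using step1[OF a1] unfolding D_def by (simp add: algebra_simps)
  have "(xb - pp) \<bullet> (- ub - (a + D pp)) = - (1/t) * ((xb - pp) \<bullet> (xb - pp)) + (xb - pp) \<bullet> (D xb - D pp)"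
  proof -
    have eq: "- ub - (a + D pp) = - (1/t) *\<^sub>R (xb - pp) + (D xb - D pp)"
      unfolding xp using tp by (simp add: algebra_simps)
    show ?thesis unfolding eq inner_add_right inner_scaleR_right by simp
  qed
  moreover have "(xb - pp) \<bullet> (D xb - D pp) \<le> LD * ((xb - pp) \<bullet> (xb - pp))"
  proof -
    have "(xb - pp) \<bullet> (D xb - D pp) \<le> norm (xb - pp) * norm (D xb - D pp)" by (rule norm_cauchy_schwarz)
    also have "\<dots> \<le> norm (xb - pp) * (LD * norm (xb - pp))" by (intro mult_left_mono Dlip) auto
    also have "\<dots> = LD * ((xb - pp) \<bullet> (xb - pp))" by (simp add: power2_norm_eq_inner[symmetric] power2_eq_square)
    finally show ?thesis .
  qed
  moreover have "1/t = 2 * LD" unfolding t_def by simp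
  ultimately have "LD * ((xb - pp) \<bullet> (xb - pp)) \<le> 0" using s1 by (simp add: algebra_simps) 
  then have "(xb - pp) \<bullet> (xb - pp) \<le> 0" using LDp by (simp add: mult_le_0_iff)
  then have ppx: "pp = xb" by (metis antisym inner_ge_zero inner_eq_zero_iff eq_iff_diff_eq_0)
  then have "t *\<^sub>R (a + ub + D xb) = 0" using xp by simp
  then have "a + ub + D xb = 0" using tp by simp
  then have "a = - ub - B xb - C xb" unfolding D_def
    by (metis add.assoc add_diff_cancel_left' diff_minus_eq_add minus_add_distrib minus_diff_eq eq_neg_iff_add_eq_0 diff_0)
  then have inA2: "- ub - B xb - C xb \<in> A2 xb" using a1 ppx by simp
  have "ub \<in> A1 xb"
  proof (rule maxmono_max[OF A1])
    fix qq v assume v: "v \<in> A1 qq"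
    have "(- ub - B xb - C xb) + B xb + C xb = - ub" by simp
    then show "0 \<le> (xb - qq) \<bullet> (ub - v)" using star[OF inA2 v] by simp
  qed
  then show ?thesis using inA2 unfolding Sset_def by simp
qed

end

lemma weak_compact2:
  fixes s t :: "nat \<Rightarrow> 'a::{real_inner,complete_space}"
  assumes "\<And>n. norm (s n) \<le> K1" "\<And>n. norm (t n) \<le> K2"
  shows "\<exists>r a b. strict_mono r \<and> weakly_converges (s \<circ> r) a \<and> weakly_converges (t \<circ> r) b"
proof -
  obtain r1 a where r1: "strict_mono r1" "weakly_converges (s \<circ> r1) a" using weak_compact[where s=s and K=K1, OF assms(1)] by blast
  obtain r2 b where r2: "strict_mono r2" "weakly_converges ((t \<circ> r1) \<circ> r2) b"
    using weak_compact[of "t \<circ> r1" K2] assms(2) by auto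
  have "weakly_converges ((s \<circ> r1) \<circ> r2) a" by (rule wc_subseq[OF r1(2) r2(1)])
  then show ?thesis using r1(1) r2 by (intro exI[of _ "r1 \<circ> r2"] exI[of _ a] exI[of _ b])
      (simp add: strict_mono_o o_assoc)
qed

context algo
begin

lemma Qf_shift:
  "Qf gam lam (a - p) (b - q) = Qf gam lam a b - 2 * ((a \<bullet> p)/gam - a \<bullet> q - b \<bullet> p + lam * (b \<bullet> q)) + Qf gam lam p q"
  unfolding Qf_def power2_norm_eq_inner
  by (simp add: inner_diff_left inner_diff_right inner_commute algebra_simps add_divide_distrib diff_divide_distrib)

lemma cluster_unique:
  assumes r1: "strict_mono r1" and w1: "weakly_converges (x \<circ> r1) p1" "weakly_converges (u \<circ> r1) q1"
    and r2: "strict_mono r2" and w2: "weakly_converges (x \<circ> r2) p2" "weakly_converges (u \<circ> r2) q2"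
    and S1: "(p1, q1) \<in> Sset" and S2: "(p2, q2) \<in> Sset"
  shows "p1 = p2"
proof -
  define dp where "dp = p1 - p2"
  define dq where "dq = q1 - q2"
  define g where "g n = (x n \<bullet> dp)/gam - x n \<bullet> dq - u n \<bullet> dp + lam * (u n \<bullet> dq)" for n
  have geq: "g n = (Qf gam lam (x n - p2) (u n - q2) - Qf gam lam (x n - p1) (u n - q1)
                   - Qf gam lam p2 q2 + Qf gam lam p1 q1) / 2" for n
    unfolding Qf_shift g_def dp_def dq_def
    by (simp add: inner_diff_right algebra_simps diff_divide_distrib)
  obtain a1 where a1: "(\<lambda>n. Qf gam lam (x n - p1) (u n - q1)) \<longlonglongrightarrow> a1"
    using Q_conv[OF S1] unfolding convergent_def by blast
  obtain a2 where a2: "(\<lambda>n. Qf gam lam (x n - p2) (u n - q2)) \<longlonglongrightarrow> a2"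
    using Q_conv[OF S2] unfolding convergent_def by blast
  define l where "l = (a2 - a1 - Qf gam lam p2 q2 + Qf gam lam p1 q1) / 2"
  have l: "g \<longlonglongrightarrow> l" unfolding geq l_def
    by (intro tendsto_divide tendsto_add tendsto_diff a1 a2 tendsto_const) auto
  have lim_sub: "(\<lambda>k. g (r k)) \<longlonglongrightarrow> (p \<bullet> dp)/gam - p \<bullet> dq - q \<bullet> dp + lam * (q \<bullet> dq)"
    if "weakly_converges (x \<circ> r) p" "weakly_converges (u \<circ> r) q" for r p q
    unfolding g_def using that gampos unfolding weakly_converges_def o_def
    by (intro tendsto_add tendsto_diff tendsto_divide tendsto_mult tendsto_const) auto
  have "(\<lambda>k. g (r1 k)) \<longlonglongrightarrow> l" using LIMSEQ_subseq_LIMSEQ[OF l r1] by (simp add: o_def)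
  then have e1: "(p1 \<bullet> dp)/gam - p1 \<bullet> dq - q1 \<bullet> dp + lam * (q1 \<bullet> dq) = l"
    using lim_sub[OF w1] LIMSEQ_unique by blast
  have "(\<lambda>k. g (r2 k)) \<longlonglongrightarrow> l" using LIMSEQ_subseq_LIMSEQ[OF l r2] by (simp add: o_def)
  then have e2: "(p2 \<bullet> dp)/gam - p2 \<bullet> dq - q2 \<bullet> dp + lam * (q2 \<bullet> dq) = l"
    using lim_sub[OF w2] LIMSEQ_unique by blast
  have "Qf gam lam dp dq = ((p1 \<bullet> dp)/gam - p1 \<bullet> dq - q1 \<bullet> dp + lam * (q1 \<bullet> dq))
         - ((p2 \<bullet> dp)/gam - p2 \<bullet> dq - q2 \<bullet> dp + lam * (q2 \<bullet> dq))"
    unfolding Qf_def power2_norm_eq_inner dp_def dq_def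
    by (simp add: inner_diff_left inner_diff_right inner_commute algebra_simps diff_divide_distrib add_divide_distrib)
  then have Q0: "Qf gam lam dp dq = 0" using e1 e2 by simp
  have "(1/gam - 1/lam) * (norm dp)^2 \<le> Qf gam lam dp dq"
    using quad_lb1[OF lampos, where k="1/gam" and X=dp and U=dq] unfolding Qf_def by (simp add: divide_inverse mult.commute)
  moreover have "1/gam - 1/lam > 0" using consts_pos(1) Lpos unfolding c1_def by linarith
  ultimately have "(norm dp)^2 \<le> 0" using Q0 by (simp add: mult_le_0_iff)
  then show ?thesis unfolding dp_def by simp
qed

lemma main: "\<exists>xbar \<in> zer (op_sum4 A1 A2 B C). weakly_converges x xbar"
proof -
  obtain Kx where Kx: "\<And>n. norm (x n) \<le> Kx" using x_bounded by blast
  obtain Ku where Ku: "\<And>n. norm (u n) \<le> Ku" using u_bounded by blast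
  obtain r xb ub where r: "strict_mono r" "weakly_converges (x \<circ> r) xb" "weakly_converges (u \<circ> r) ub"
    using weak_compact2[where s=x and t=u, OF Kx Ku] by blast
  have S: "(xb, ub) \<in> Sset" by (rule cluster[OF r])
  have "weakly_converges x xb"
    unfolding weakly_converges_def
  proof
    fix z
    show "(\<lambda>n. x n \<bullet> z) \<longlonglongrightarrow> xb \<bullet> z"
    proof (rule ccontr)
      assume nc: "\<not> (\<lambda>n. x n \<bullet> z) \<longlonglongrightarrow> xb \<bullet> z"
      then obtain e where e: "e > 0" and ee: "\<forall>N. \<exists>n\<ge>N. \<not> dist (x n \<bullet> z) (xb \<bullet> z) < e"
        unfolding lim_sequentially by blast
      define Iset where "Iset = {n. e \<le> dist (x n \<bullet> z) (xb \<bullet> z)}"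
      have inf: "infinite Iset" unfolding infinite_nat_iff_unbounded_le Iset_def using ee by (auto simp: not_less)
      define r3 where "r3 = enumerate Iset"
      have r3m: "strict_mono r3" unfolding r3_def by (rule strict_mono_enumerate[OF inf])
      have r3I: "r3 k \<in> Iset" for k unfolding r3_def by (rule enumerate_in_set[OF inf])
      obtain r4 p q where r4: "strict_mono r4" "weakly_converges ((x \<circ> r3) \<circ> r4) p" "weakly_converges ((u \<circ> r3) \<circ> r4) q"
        using weak_compact2[of "x \<circ> r3" Kx "u \<circ> r3" Ku] Kx Ku by auto
      define r6 where "r6 = r3 \<circ> r4"
      have r6m: "strict_mono r6" unfolding r6_def using r3m r4(1) by (rule strict_mono_o)
      have w6: "weakly_converges (x \<circ> r6) p" "weakly_converges (u \<circ> r6) q"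
        using r4 unfolding r6_def by (simp_all add: o_assoc)
      have S6: "(p, q) \<in> Sset" by (rule cluster[OF r6m w6])
      have "xb = p" by (rule cluster_unique[OF r(1) r(2) r(3) r6m w6 S S6])
      then have "(\<lambda>k. x (r6 k) \<bullet> z) \<longlonglongrightarrow> xb \<bullet> z" using w6(1) unfolding weakly_converges_def o_def by simp
      then obtain N where "\<forall>k\<ge>N. dist (x (r6 k) \<bullet> z) (xb \<bullet> z) < e" using e unfolding lim_sequentially by blast
      moreover have "r6 N \<in> Iset" unfolding r6_def using r3I by simp
      ultimately show False unfolding Iset_def by force
    qed
  qed
  then show ?thesis using Sset_zer[OF S] by blast
qed

end

theorem theorem3p3:
  fixes A1 A2 :: "'a::{real_inner, complete_space} \<Rightarrow> 'a set"
    and B C :: "'a \<Rightarrow> 'a"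
    and L \<beta> lam gam :: real
    and xm1 x0 u0 :: 'a
    and x y u :: "nat \<Rightarrow> 'a"
  assumes A1: "maximally_monotone A1"
    and A2: "maximally_monotone A2"
    and Bmono: "monotone_fun B"
    and Lpos: "L > 0"
    and Blip: "L-lipschitz_on UNIV B"
    and betapos: "\<beta> > 0"
    and Ccoc: "cocoercive \<beta> C"
    and zne: "zer (op_sum4 A1 A2 B C) \<noteq> {}"
    and lampos: "lam > 0"
    and gampos: "gam > 0"
    and gamub: "gam < lam * \<beta> / (\<beta> + lam * (2 * \<beta> * L + 1))"
    and x_init: "x 0 = x0"
    and u_init: "u 0 = u0"
    and x_rec: "\<And>n. x (Suc n) = resolvent gam A2
        (x n - gam *\<^sub>R u n
             - gam *\<^sub>R (2 *\<^sub>R B (x n) - B (if n = 0 then xm1 else x (n - 1)))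
             - gam *\<^sub>R C (x n))"
    and y_rec: "\<And>n. y (Suc n) = resolvent lam A1 (2 *\<^sub>R x (Suc n) - x n + lam *\<^sub>R u n)"
    and u_rec: "\<And>n. u (Suc n) = u n + (1 / lam) *\<^sub>R (2 *\<^sub>R x (Suc n) - x n - y (Suc n))"
  shows "\<exists>xbar \<in> zer (op_sum4 A1 A2 B C). weakly_converges x xbar"
proof -
  interpret algo A1 A2 B C L \<beta> lam gam xm1 x0 u0 x y u
    by (rule algo.intro) (fact assms)+
  show ?thesis by (rule main)
qed

end
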